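(* For every $\mu\in\overline{\mathbb R}$, the subspace $A_{[\mu]}$ is a subalgebra of $A_\mu$. Further, $\Delta_\mu(A_{[\mu]})\subset A_{[\mu]}\otimes A_{[\mu]}$, and $A_{[\mu]}$ becomes a bialgebra when endowed with the coproduct $\Delta_\mu$.
   Context: Let $\Gamma$ be a discrete submonoid of $\{(r,d)\in\mathbb R^2: r>0\text{ or }(r=0\text{ and }d\ge0)\}$ and $A=\bigoplus_{\gamma\in\Gamma}A^\gamma$ a connected ($A^0=k$) $\Gamma$-graded bialgebra over a field $k$, coproduct $\Delta$. Write $|a|=\gamma$ for $a\in A^\gamma$. For homogeneous $a$, $L(a)$ (resp. $R(a)$) is the set of $\beta$ (resp. $\gamma$) such that $\Delta(a)$ has a nonzero component in $A^\beta\otimes A^\gamma$. Let $\overline{\mathbb R}=\mathbb R\cup\{\infty\}$ with $\infty$ larger than all reals; $\Gamma_\infty=\{(r,d)\in\Gamma:r=0\}$, $\Gamma_\mu=\{(r,d)\in\Gamma: d=\mu r\}$ for real $\mu$, $\Gamma_{\le\mu}=\bigcup_{\nu\le\mu}\Gamma_\nu$, $\Gamma_{\ge\mu}=\bigcup_{\nu\ge\mu}\Gamma_\nu$. A homogeneous $a$ is of slope $\mu$ if $|a|\in\Gamma_\mu$, and semistable of slope $\mu$ if moreover $L(a)\subset\Gamma_{\le\mu}$ (equivalently $R(a)\subset\Gamma_{\ge\mu}$). $A_\mu$ (resp. $A_{[\mu]}$) is the span of the homogeneous elements of slope $\mu$ (resp. semistable of slope $\mu$). $p_\mu:A\to A_\mu$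 is the projection along $\bigoplus_{\gamma\notin\Gamma_\mu}A^\gamma$ and $\Delta_\mu=(p_\mu\otimes p_\mu)\circ\Delta$. *)

theory Defs
  imports "HOL-Analysis.Analysis"
begin

definition klinear :: "('k::field \<Rightarrow> 'a::ring_1 \<Rightarrow> 'a) \<Rightarrow> ('a \<Rightarrow> 'k) \<Rightarrow> bool" where
  "klinear sc f \<longleftrightarrow> (\<forall>x y. f (x + y) = f x + f y) \<and> (\<forall>c x. f (sc c x) = c * f x)"

definition kalgebra :: "('k::field \<Rightarrow> 'a::ring_1 \<Rightarrow> 'a) \<Rightarrow> bool" where
  "kalgebra sc \<longleftrightarrow> vector_space sc \<and>
     (\<forall>c x y. sc c (x * y) = sc c x * y \<and> sc c (x * y) = x * sc c y)"

text \<open>An element of A (x) A is represented by a list [(x_i,y_i)] standing for the sum of x_i (x) y_i;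
  two representatives denote the same tensor iff every k-bilinear form A x A -> k
  (i.e. every element of the dual of A (x) A) takes the same value on them.\<close>

definition bilinear_form :: "('k::field \<Rightarrow> 'a::ring_1 \<Rightarrow> 'a) \<Rightarrow> ('a \<Rightarrow> 'a \<Rightarrow> 'k) \<Rightarrow> bool" where
  "bilinear_form sc B \<longleftrightarrow> (\<forall>y. klinear sc (\<lambda>x. B x y)) \<and> (\<forall>x. klinear sc (\<lambda>y. B x y))"

definition trilinear_form :: "('k::field \<Rightarrow> 'a::ring_1 \<Rightarrow> 'a) \<Rightarrow> ('a \<Rightarrow> 'a \<Rightarrow> 'a \<Rightarrow> 'k) \<Rightarrow> bool" where
  "trilinear_form sc T \<longleftrightarrow> (\<forall>y z. klinear sc (\<lambda>x. T x y z)) \<and>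
     (\<forall>x z. klinear sc (\<lambda>y. T x y z)) \<and> (\<forall>x y. klinear sc (\<lambda>z. T x y z))"

definition teq2 :: "('k::field \<Rightarrow> 'a::ring_1 \<Rightarrow> 'a) \<Rightarrow> ('a \<times> 'a) list \<Rightarrow> ('a \<times> 'a) list \<Rightarrow> bool" where
  "teq2 sc xs ys \<longleftrightarrow> (\<forall>B. bilinear_form sc B \<longrightarrow>
     sum_list (map (\<lambda>(x, y). B x y) xs) = sum_list (map (\<lambda>(x, y). B x y) ys))"

definition teq3 :: "('k::field \<Rightarrow> 'a::ring_1 \<Rightarrow> 'a) \<Rightarrow> ('a \<times> 'a \<times> 'a) list \<Rightarrow> ('a \<times> 'a \<times> 'a) list \<Rightarrow> bool" where
  "teq3 sc xs ys \<longleftrightarrow> (\<forall>T. trilinear_form sc T \<longrightarrow>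
     sum_list (map (\<lambda>(x, y, z). T x y z) xs) = sum_list (map (\<lambda>(x, y, z). T x y z) ys))"

text \<open>(c (x) id) and (id (x) c) applied to a tensor, and the product in A (x) A.\<close>
definition cop_left :: "('a \<Rightarrow> ('a \<times> 'a) list) \<Rightarrow> ('a \<times> 'a) list \<Rightarrow> ('a \<times> 'a \<times> 'a) list" where
  "cop_left c zs = concat (map (\<lambda>(x, y). map (\<lambda>(u, v). (u, v, y)) (c x)) zs)"

definition cop_right :: "('a \<Rightarrow> ('a \<times> 'a) list) \<Rightarrow> ('a \<times> 'a) list \<Rightarrow> ('a \<times> 'a \<times> 'a) list" where
  "cop_right c zs = concat (map (\<lambda>(x, y). map (\<lambda>(u, v). (x, u, v)) (c y)) zs)"

definition tmult :: "('a::ring_1 \<times> 'a) list \<Rightarrow> ('a \<times> 'a) list \<Rightarrow> ('a \<times> 'a) list" where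
  "tmult zs ws = concat (map (\<lambda>(x, y). map (\<lambda>(u, v). (x * u, y * v)) ws) zs)"

text \<open>Since k is a field, V (x) V embeds in A (x) A (and likewise for
  triple tensors), so equalities of tensors may be tested in A (x) A.\<close>
definition bialgebra_on ::
  "('k::field \<Rightarrow> 'a::ring_1 \<Rightarrow> 'a) \<Rightarrow> 'a set \<Rightarrow> ('a \<Rightarrow> ('a \<times> 'a) list) \<Rightarrow> ('a \<Rightarrow> 'k) \<Rightarrow> bool" where
  "bialgebra_on sc V c e \<longleftrightarrow>
     module.subspace sc V \<and> 1 \<in> V \<and> (\<forall>x\<in>V. \<forall>y\<in>V. x * y \<in> V) \<and>
     (\<forall>a\<in>V. \<exists>zs. set zs \<subseteq> V \<times> V \<and> teq2 sc (c a) zs) \<and>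
     (\<forall>x\<in>V. \<forall>y\<in>V. teq2 sc (c (x + y)) (c x @ c y)) \<and>
     (\<forall>s. \<forall>x\<in>V. teq2 sc (c (sc s x)) (map (\<lambda>(u, v). (sc s u, v)) (c x))) \<and>
     (\<forall>x\<in>V. \<forall>y\<in>V. e (x + y) = e x + e y) \<and>
     (\<forall>s. \<forall>x\<in>V. e (sc s x) = s * e x) \<and>
     (\<forall>a\<in>V. teq3 sc (cop_left c (c a)) (cop_right c (c a))) \<and>
     (\<forall>a\<in>V. sum_list (map (\<lambda>(x, y). sc (e x) y) (c a)) = a) \<and>
     (\<forall>a\<in>V. sum_list (map (\<lambda>(x, y). sc (e y) x) (c a)) = a) \<and>
     (\<forall>x\<in>V. \<forall>y\<in>V. teq2 sc (c (x * y)) (tmult (c x) (c y))) \<and>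
     teq2 sc (c 1) [(1, 1)] \<and>
     (\<forall>x\<in>V. \<forall>y\<in>V. e (x * y) = e x * e y) \<and> e 1 = 1"

definition halfplane :: "(real \<times> real) set" where
  "halfplane = {(r, d). r > 0 \<or> (r = 0 \<and> d \<ge> 0)}"

definition discrete_submonoid :: "(real \<times> real) set \<Rightarrow> bool" where
  "discrete_submonoid \<Gamma> \<longleftrightarrow> \<Gamma> \<subseteq> halfplane \<and> 0 \<in> \<Gamma> \<and>
     (\<forall>\<beta>\<in>\<Gamma>. \<forall>\<gamma>\<in>\<Gamma>. \<beta> + \<gamma> \<in> \<Gamma>) \<and>
     (\<forall>\<gamma>\<in>\<Gamma>. \<exists>\<epsilon>>0. \<forall>\<delta>\<in>\<Gamma>. dist \<delta> \<gamma> < \<epsilon> \<longrightarrow> \<delta> = \<gamma>)"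

text \<open>Slopes range over extended reals; only values different from -\<infinity> are meaningful
  (the paper's R-bar = R \<union> {\<infinity>}).\<close>
definition Gam_slope :: "(real \<times> real) set \<Rightarrow> ereal \<Rightarrow> (real \<times> real) set" where
  "Gam_slope \<Gamma> \<mu> = {(r, d) \<in> \<Gamma>. if \<mu> = \<infinity> then r = 0 else d = real_of_ereal \<mu> * r}"

definition Gam_le :: "(real \<times> real) set \<Rightarrow> ereal \<Rightarrow> (real \<times> real) set" where
  "Gam_le \<Gamma> \<mu> = (\<Union>\<nu>\<in>{\<nu>. \<nu> \<noteq> -\<infinity> \<and> \<nu> \<le> \<mu>}. Gam_slope \<Gamma> \<nu>)"

definition graded_decomp ::
  "('k::field \<Rightarrow> 'a::ring_1 \<Rightarrow> 'a) \<Rightarrow> (real \<times> real) set \<Rightarrow> (real \<times> real \<Rightarrow> 'a set) \<Rightarrow> bool" where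
  "graded_decomp sc \<Gamma> Agr \<longleftrightarrow>
     (\<forall>\<gamma>. module.subspace sc (Agr \<gamma>)) \<and> (\<forall>\<gamma>. \<gamma> \<notin> \<Gamma> \<longrightarrow> Agr \<gamma> = {0}) \<and>
     (\<forall>a. \<exists>!f. finite {\<gamma>. f \<gamma> \<noteq> 0} \<and> (\<forall>\<gamma>. f \<gamma> \<in> Agr \<gamma>) \<and> a = (\<Sum>\<gamma>\<in>{\<gamma>. f \<gamma> \<noteq> 0}. f \<gamma>))"

definition hcomp :: "(real \<times> real \<Rightarrow> 'a::ring_1 set) \<Rightarrow> 'a \<Rightarrow> real \<times> real \<Rightarrow> 'a" where
  "hcomp Agr a = (THE f. finite {\<gamma>. f \<gamma> \<noteq> 0} \<and> (\<forall>\<gamma>. f \<gamma> \<in> Agr \<gamma>) \<and> a = (\<Sum>\<gamma>\<in>{\<gamma>. f \<gamma> \<noteq> 0}. f \<gamma>))"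

definition proj_slope :: "(real \<times> real) set \<Rightarrow> (real \<times> real \<Rightarrow> 'a::ring_1 set) \<Rightarrow> ereal \<Rightarrow> 'a \<Rightarrow> 'a" where
  "proj_slope \<Gamma> Agr \<mu> a = (\<Sum>\<gamma>\<in>{\<gamma> \<in> Gam_slope \<Gamma> \<mu>. hcomp Agr a \<gamma> \<noteq> 0}. hcomp Agr a \<gamma>)"

definition Delta_slope ::
  "(real \<times> real) set \<Rightarrow> (real \<times> real \<Rightarrow> 'a::ring_1 set) \<Rightarrow> ('a \<Rightarrow> ('a \<times> 'a) list) \<Rightarrow> ereal \<Rightarrow> 'a \<Rightarrow> ('a \<times> 'a) list" where
  "Delta_slope \<Gamma> Agr \<Delta> \<mu> a = map (\<lambda>(x, y). (proj_slope \<Gamma> Agr \<mu> x, proj_slope \<Gamma> Agr \<mu> y)) (\<Delta> a)"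

definition Lset ::
  "('k::field \<Rightarrow> 'a::ring_1 \<Rightarrow> 'a) \<Rightarrow> (real \<times> real \<Rightarrow> 'a set) \<Rightarrow> ('a \<Rightarrow> ('a \<times> 'a) list) \<Rightarrow> 'a \<Rightarrow> (real \<times> real) set" where
  "Lset sc Agr \<Delta> a = {\<beta>. \<exists>\<gamma>. \<not> teq2 sc (map (\<lambda>(x, y). (hcomp Agr x \<beta>, hcomp Agr y \<gamma>)) (\<Delta> a)) []}"

definition semistable ::
  "('k::field \<Rightarrow> 'a::ring_1 \<Rightarrow> 'a) \<Rightarrow> (real \<times> real) set \<Rightarrow> (real \<times> real \<Rightarrow> 'a set) \<Rightarrow> ('a \<Rightarrow> ('a \<times> 'a) list) \<Rightarrow> ereal \<Rightarrow> 'a \<Rightarrow> bool" where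
  "semistable sc \<Gamma> Agr \<Delta> \<mu> a \<longleftrightarrow>
     (\<exists>\<gamma>\<in>Gam_slope \<Gamma> \<mu>. a \<in> Agr \<gamma>) \<and> Lset sc Agr \<Delta> a \<subseteq> Gam_le \<Gamma> \<mu>"

definition A_slope :: "('k::field \<Rightarrow> 'a::ring_1 \<Rightarrow> 'a) \<Rightarrow> (real \<times> real) set \<Rightarrow> (real \<times> real \<Rightarrow> 'a set) \<Rightarrow> ereal \<Rightarrow> 'a set" where
  "A_slope sc \<Gamma> Agr \<mu> = module.span sc {a. \<exists>\<gamma>\<in>Gam_slope \<Gamma> \<mu>. a \<in> Agr \<gamma>}"

definition A_ss :: "('k::field \<Rightarrow> 'a::ring_1 \<Rightarrow> 'a) \<Rightarrow> (real \<times> real) set \<Rightarrow> (real \<times> real \<Rightarrow> 'a set) \<Rightarrow> ('a \<Rightarrow> ('a \<times> 'a) list) \<Rightarrow> ereal \<Rightarrow> 'a set" where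
  "A_ss sc \<Gamma> Agr \<Delta> \<mu> = module.span sc {a. semistable sc \<Gamma> Agr \<Delta> \<mu> a}"

definition connected_graded_bialgebra ::
  "('k::field \<Rightarrow> 'a::ring_1 \<Rightarrow> 'a) \<Rightarrow> (real \<times> real) set \<Rightarrow> (real \<times> real \<Rightarrow> 'a set) \<Rightarrow> ('a \<Rightarrow> ('a \<times> 'a) list) \<Rightarrow> ('a \<Rightarrow> 'k) \<Rightarrow> bool" where
  "connected_graded_bialgebra sc \<Gamma> Agr \<Delta> \<epsilon> \<longleftrightarrow>
     kalgebra sc \<and> discrete_submonoid \<Gamma> \<and> graded_decomp sc \<Gamma> Agr \<and>
     bialgebra_on sc UNIV \<Delta> \<epsilon> \<and>
     (\<forall>\<beta> \<gamma> x y. x \<in> Agr \<beta> \<longrightarrow> y \<in> Agr \<gamma> \<longrightarrow> x * y \<in> Agr (\<beta> + \<gamma>)) \<and>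
     Agr 0 = range (\<lambda>c. sc c 1) \<and>
     (\<forall>\<gamma> a. a \<in> Agr \<gamma> \<longrightarrow> (\<exists>zs. teq2 sc (\<Delta> a) zs \<and>
        (\<forall>(x, y)\<in>set zs. \<exists>\<beta> \<beta>'. \<beta> + \<beta>' = \<gamma> \<and> x \<in> Agr \<beta> \<and> y \<in> Agr \<beta>'))) \<and>
     (\<forall>\<gamma> a. \<gamma> \<noteq> 0 \<longrightarrow> a \<in> Agr \<gamma> \<longrightarrow> \<epsilon> a = 0)"

end

theory Submission imports Defs begin

definition ev2 :: "('a \<Rightarrow> 'a \<Rightarrow> 'k::comm_monoid_add) \<Rightarrow> ('a \<times> 'a) list \<Rightarrow> 'k" where
  "ev2 B zs = sum_list (map (\<lambda>(x, y). B x y) zs)"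

definition ev3 :: "('a \<Rightarrow> 'a \<Rightarrow> 'a \<Rightarrow> 'k::comm_monoid_add) \<Rightarrow> ('a \<times> 'a \<times> 'a) list \<Rightarrow> 'k" where
  "ev3 T ts = sum_list (map (\<lambda>(x, y, z). T x y z) ts)"

lemma ev2_simps[simp]:
  "ev2 B [] = 0" "ev2 B ((x,y)#zs) = B x y + ev2 B zs" "ev2 B (xs @ ys) = ev2 B xs + ev2 B ys"
  by (auto simp: ev2_def)

lemma teq2_ev: "teq2 sc xs ys \<longleftrightarrow> (\<forall>B. bilinear_form sc B \<longrightarrow> ev2 B xs = ev2 B ys)"
  by (simp add: teq2_def ev2_def)

lemma teq3_ev: "teq3 sc xs ys \<longleftrightarrow> (\<forall>T. trilinear_form sc T \<longrightarrow> ev3 T xs = ev3 T ys)"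
  by (simp add: teq3_def ev3_def)

lemma teq2_D: "teq2 sc xs ys \<Longrightarrow> bilinear_form sc B \<Longrightarrow> ev2 B xs = ev2 B ys"
  by (simp add: teq2_ev)

lemma teq3_D: "teq3 sc xs ys \<Longrightarrow> trilinear_form sc T \<Longrightarrow> ev3 T xs = ev3 T ys"
  by (simp add: teq3_ev)

lemma teq2I: "(\<And>B. bilinear_form sc B \<Longrightarrow> ev2 B xs = ev2 B ys) \<Longrightarrow> teq2 sc xs ys"
  by (simp add: teq2_ev)

lemma ev2_map: "ev2 B (map (\<lambda>(x,y). (f x, g y)) zs) = ev2 (\<lambda>x y. B (f x) (g y)) zs"
  by (induct zs) auto

lemma ev2_add: "ev2 (\<lambda>x y. F x y + G x y) zs = ev2 F zs + ev2 G zs"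
  by (induct zs) (auto simp: add_ac)

lemma ev2_cmult: "ev2 (\<lambda>x y. (c::'k::comm_ring) * F x y) zs = c * ev2 F zs"
  by (induct zs) (auto simp: algebra_simps)

lemma ev2_multc: "ev2 (\<lambda>x y. F x y * (c::'k::comm_ring)) zs = ev2 F zs * c"
  by (induct zs) (auto simp: algebra_simps)

lemma ev2_sum: "ev2 (\<lambda>x y. \<Sum>i\<in>I. F i x y) zs = (\<Sum>i\<in>I. ev2 (F i) zs)"
  by (induct zs) (auto simp: sum.distrib)

lemma ev2_cong: "(\<And>x y. (x,y) \<in> set zs \<Longrightarrow> F x y = G x y) \<Longrightarrow> ev2 F zs = ev2 G zs"
  by (induct zs) auto

lemma ev2_zero: "(\<And>x y. (x,y) \<in> set zs \<Longrightarrow> F x y = 0) \<Longrightarrow> ev2 F zs = 0"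
  by (induct zs) auto

lemma ev2_swap: "ev2 (\<lambda>x y. ev2 (\<lambda>u v. F x y u v) ws) zs = ev2 (\<lambda>u v. ev2 (\<lambda>x y. F x y u v) zs) ws"
proof (induct zs)
  case Nil then show ?case by (induct ws) auto
next
  case (Cons z zs) then show ?case by (cases z) (simp add: ev2_add)
qed

lemma ev2_concat: "ev2 B (concat (map f xs)) = sum_list (map (\<lambda>x. ev2 B (f x)) xs)"
  by (induct xs) auto

lemma ev2_filter_label:
  assumes "\<And>l x y. (l,(x,y)) \<in> set L \<Longrightarrow> B' x y = (if P l then B x y else 0)"
  shows "ev2 B' (map snd L) = ev2 B (map snd (filter (\<lambda>e. P (fst e)) L))"
  using assms
proof (induct L)
  case (Cons e L)
  obtain l x y where e: "e = (l,(x,y))" by (cases e) auto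
  have "B' x y = (if P l then B x y else 0)" using Cons.prems e by auto
  moreover have "ev2 B' (map snd L) = ev2 B (map snd (filter (\<lambda>e. P (fst e)) L))"
    using Cons by auto
  ultimately show ?case using e by auto
qed simp

lemma sum_list_group:
  "sum_list (map f xs) = (\<Sum>k\<in>set (map g xs). sum_list (map f (filter (\<lambda>x. g x = k) xs)))"
proof (induct xs)
  case Nil then show ?case by simp
next
  case (Cons x xs)
  let ?K = "set (map g xs)"
  have fin: "finite ?K" by simp
  have "(\<Sum>k\<in>insert (g x) ?K. sum_list (map f (filter (\<lambda>y. g y = k) (x#xs))))
      = (\<Sum>k\<in>insert (g x) ?K. (if g x = k then f x else 0) + sum_list (map f (filter (\<lambda>y. g y = k) xs)))"
    by (intro sum.cong) auto
  also have "\<dots> = (\<Sum>k\<in>insert (g x) ?K. (if g x = k then f x else 0)) + (\<Sum>k\<in>insert (g x) ?K. sum_list (map f (filter (\<lambda>y. g y = k) xs)))"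
    by (rule sum.distrib)
  also have "(\<Sum>k\<in>insert (g x) ?K. (if g x = k then f x else 0)) = f x"
    by (simp add: sum.delta fin)
  also have "(\<Sum>k\<in>insert (g x) ?K. sum_list (map f (filter (\<lambda>y. g y = k) xs)))
     = (\<Sum>k\<in>?K. sum_list (map f (filter (\<lambda>y. g y = k) xs)))"
  proof (cases "g x \<in> ?K")
    case True then show ?thesis by (simp add: insert_absorb)
  next
    case False
    then have "filter (\<lambda>y. g y = g x) xs = []" by (simp add: filter_empty_conv) (metis image_eqI)
    then show ?thesis using False fin by simp
  qed
  finally show ?case using Cons by simp
qed

lemma ev2_group:
  "ev2 B (map snd L) = (\<Sum>l\<in>set (map fst L). ev2 B (map snd (filter (\<lambda>e. fst e = l) L)))"
  unfolding ev2_def using sum_list_group[of "\<lambda>e. (\<lambda>(x,y). B x y) (snd e)" L fst]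
  by (simp add: comp_def)

lemma ev3_cop_left: "ev3 T (cop_left c zs) = ev2 (\<lambda>x y. ev2 (\<lambda>u v. T u v y) (c x)) zs"
proof (induct zs)
  case Nil then show ?case by (simp add: ev3_def cop_left_def)
next
  case (Cons z zs)
  have h: "sum_list (map ((\<lambda>(x, xa, y). T x xa y) \<circ> (\<lambda>(u, v). (u, v, b))) ws) = ev2 (\<lambda>u v. T u v b) ws" for ws b
    by (induct ws) auto
  from Cons show ?case by (cases z) (auto simp: cop_left_def ev3_def h)
qed

lemma ev3_cop_right: "ev3 T (cop_right c zs) = ev2 (\<lambda>x y. ev2 (\<lambda>u v. T x u v) (c y)) zs"
proof (induct zs)
  case Nil then show ?case by (simp add: ev3_def cop_right_def)
next
  case (Cons z zs)
  have h: "sum_list (map ((\<lambda>(x, xa, y). T x xa y) \<circ> Pair a) ws) = ev2 (T a) ws" for ws a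
    by (induct ws) auto
  from Cons show ?case by (cases z) (auto simp: cop_right_def ev3_def h)
qed

lemma ev2_tmult: "ev2 B (tmult zs ws) = ev2 (\<lambda>x y. ev2 (\<lambda>u v. B (x * u) (y * v)) ws) zs"
proof (induct zs)
  case Nil then show ?case by (simp add: tmult_def)
next
  case (Cons z zs)
  have h: "ev2 B (map (\<lambda>(u, v). (x * u, y * v)) ws) = ev2 (\<lambda>u v. B (x * u) (y * v)) ws" for x y
    by (induct ws) auto
  from Cons show ?case by (cases z) (auto simp: tmult_def h)
qed

definition alin :: "('k::field \<Rightarrow> 'a::ring_1 \<Rightarrow> 'a) \<Rightarrow> ('a \<Rightarrow> 'a) \<Rightarrow> bool" where
  "alin sc f \<longleftrightarrow> (\<forall>x y. f (x + y) = f x + f y) \<and> (\<forall>c x. f (sc c x) = sc c (f x))"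

lemma alin_id: "alin sc (\<lambda>x. x)" by (simp add: alin_def)

lemma bil_comp:
  assumes "bilinear_form sc B" "alin sc f" "alin sc g"
  shows "bilinear_form sc (\<lambda>x y. B (f x) (g y))"
  using assms by (simp add: bilinear_form_def klinear_def alin_def)

lemma teq2_map:
  assumes "alin sc f" "alin sc g" "teq2 sc xs ys"
  shows "teq2 sc (map (\<lambda>(x,y). (f x, g y)) xs) (map (\<lambda>(x,y). (f x, g y)) ys)"
  using assms bil_comp unfolding teq2_ev ev2_map by blast

lemma bil_add1: "bilinear_form sc B \<Longrightarrow> B (x + x') y = B x y + B x' y"
  and bil_add2: "bilinear_form sc B \<Longrightarrow> B x (y + y') = B x y + B x y'"
  and bil_sc1: "bilinear_form sc B \<Longrightarrow> B (sc c x) y = c * B x y"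
  and bil_sc2: "bilinear_form sc B \<Longrightarrow> B x (sc c y) = c * B x y"
  by (auto simp: bilinear_form_def klinear_def)

lemma tri_comp:
  assumes "trilinear_form sc T" "alin sc f" "alin sc g" "alin sc h"
  shows "trilinear_form sc (\<lambda>x y z. T (f x) (g y) (h z))"
  using assms by (simp add: trilinear_form_def klinear_def alin_def)

lemma tri_mk1:
  assumes "bilinear_form sc B" "klinear sc \<phi>"
  shows "trilinear_form sc (\<lambda>u v w. B u v * \<phi> w)"
  using assms by (simp add: trilinear_form_def bilinear_form_def klinear_def algebra_simps)

lemma tri_mk2:
  assumes "bilinear_form sc B" "klinear sc \<phi>"
  shows "trilinear_form sc (\<lambda>u v w. \<phi> u * B v w)"
  using assms by (simp add: trilinear_form_def bilinear_form_def klinear_def algebra_simps)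

lemma tri_slice1: "trilinear_form sc T \<Longrightarrow> bilinear_form sc (\<lambda>u v. T u v y)"
  and tri_slice3: "trilinear_form sc T \<Longrightarrow> bilinear_form sc (\<lambda>u v. T x u v)"
  by (auto simp: trilinear_form_def bilinear_form_def)


locale cgb =
  fixes sc :: "'k::field \<Rightarrow> 'a::ring_1 \<Rightarrow> 'a"
    and \<Gamma> :: "(real \<times> real) set"
    and Agr :: "real \<times> real \<Rightarrow> 'a set"
    and \<Delta> :: "'a \<Rightarrow> ('a \<times> 'a) list"
    and \<epsilon> :: "'a \<Rightarrow> 'k"
    and \<mu> :: ereal
  assumes CGB: "connected_graded_bialgebra sc \<Gamma> Agr \<Delta> \<epsilon>"
    and mu: "\<mu> \<noteq> -\<infinity>"

sublocale cgb \<subseteq> vs: vector_space sc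
  using CGB by (simp add: connected_graded_bialgebra_def kalgebra_def)

context cgb begin

lemma kalgebra: "kalgebra sc"
  using CGB by (simp add: connected_graded_bialgebra_def)

lemma kalg_aux: "\<forall>c x y. sc c (x * y) = sc c x * y \<and> sc c (x * y) = x * sc c y"
  using kalgebra unfolding kalgebra_def by (rule conjunct2)

lemma kalg: "sc c (x * y) = sc c x * y" "sc c (x * y) = x * sc c y"
  using kalg_aux by blast+

lemma dsm: "\<Gamma> \<subseteq> halfplane" "0 \<in> \<Gamma>" "\<beta> \<in> \<Gamma> \<Longrightarrow> \<gamma> \<in> \<Gamma> \<Longrightarrow> \<beta> + \<gamma> \<in> \<Gamma>"
  using CGB by (auto simp: connected_graded_bialgebra_def discrete_submonoid_def)

lemma gd: "graded_decomp sc \<Gamma> Agr"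
  using CGB by (simp add: connected_graded_bialgebra_def)

lemma bia: "bialgebra_on sc UNIV \<Delta> \<epsilon>"
  using CGB by (simp add: connected_graded_bialgebra_def)

lemma Agr_mult_all: "\<forall>\<beta> \<gamma> x y. x \<in> Agr \<beta> \<longrightarrow> y \<in> Agr \<gamma> \<longrightarrow> x * y \<in> Agr (\<beta> + \<gamma>)"
  by (insert CGB, unfold connected_graded_bialgebra_def, elim conjE, assumption)

lemma Agr_mult: "x \<in> Agr \<beta> \<Longrightarrow> y \<in> Agr \<gamma> \<Longrightarrow> x * y \<in> Agr (\<beta> + \<gamma>)"
  using Agr_mult_all by blast

lemma Agr0: "Agr 0 = range (\<lambda>c. sc c 1)"
  by (insert CGB, unfold connected_graded_bialgebra_def, elim conjE, assumption)

lemma Delta_hom_all: "\<forall>\<gamma> a. a \<in> Agr \<gamma> \<longrightarrow> (\<exists>zs. teq2 sc (\<Delta> a) zs \<and>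
        (\<forall>(x, y)\<in>set zs. \<exists>\<beta> \<beta>'. \<beta> + \<beta>' = \<gamma> \<and> x \<in> Agr \<beta> \<and> y \<in> Agr \<beta>'))"
  by (insert CGB, unfold connected_graded_bialgebra_def, elim conjE, assumption)

lemma Delta_hom: "a \<in> Agr \<gamma> \<Longrightarrow> \<exists>zs. teq2 sc (\<Delta> a) zs \<and>
        (\<forall>(x, y)\<in>set zs. \<exists>\<beta> \<beta>'. \<beta> + \<beta>' = \<gamma> \<and> x \<in> Agr \<beta> \<and> y \<in> Agr \<beta>')"
  using Delta_hom_all by blast

lemma eps_hom_all: "\<forall>\<gamma> a. \<gamma> \<noteq> 0 \<longrightarrow> a \<in> Agr \<gamma> \<longrightarrow> \<epsilon> a = 0"
  by (insert CGB, unfold connected_graded_bialgebra_def, elim conjE, assumption)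

lemma eps_hom: "\<gamma> \<noteq> 0 \<Longrightarrow> a \<in> Agr \<gamma> \<Longrightarrow> \<epsilon> a = 0"
  using eps_hom_all by blast

lemma Agr_sub_all: "\<forall>\<gamma>. module.subspace sc (Agr \<gamma>)"
  by (insert gd, unfold graded_decomp_def, elim conjE, assumption)

lemma Agr_sub: "vs.subspace (Agr \<gamma>)"
  using Agr_sub_all by blast

lemma Agr_out_all: "\<forall>\<gamma>. \<gamma> \<notin> \<Gamma> \<longrightarrow> Agr \<gamma> = {0}"
  by (insert gd, unfold graded_decomp_def, elim conjE, assumption)

lemma Agr_out: "\<gamma> \<notin> \<Gamma> \<Longrightarrow> Agr \<gamma> = {0}"
  using Agr_out_all by blast

lemma gd_ex1: "\<exists>!f. finite {\<gamma>. f \<gamma> \<noteq> 0} \<and> (\<forall>\<gamma>. f \<gamma> \<in> Agr \<gamma>) \<and> a = (\<Sum>\<gamma>\<in>{\<gamma>. f \<gamma> \<noteq> 0}. f \<gamma>)"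
proof -
  have "\<forall>a. \<exists>!f. finite {\<gamma>. f \<gamma> \<noteq> 0} \<and> (\<forall>\<gamma>. f \<gamma> \<in> Agr \<gamma>) \<and> a = (\<Sum>\<gamma>\<in>{\<gamma>. f \<gamma> \<noteq> 0}. f \<gamma>)"
    by (insert gd, unfold graded_decomp_def, elim conjE, assumption)
  then show ?thesis by blast
qed

lemma Agr_0[simp]: "0 \<in> Agr \<gamma>"
  using Agr_sub vs.subspace_0 by blast

lemma Agr_add: "x \<in> Agr \<gamma> \<Longrightarrow> y \<in> Agr \<gamma> \<Longrightarrow> x + y \<in> Agr \<gamma>"
  using Agr_sub vs.subspace_add by blast

lemma Agr_sc: "x \<in> Agr \<gamma> \<Longrightarrow> sc c x \<in> Agr \<gamma>"
  using Agr_sub vs.subspace_scale by blast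

lemma Agr_sum: "(\<And>i. i \<in> I \<Longrightarrow> f i \<in> Agr \<gamma>) \<Longrightarrow> sum f I \<in> Agr \<gamma>"
  using Agr_sub vs.subspace_sum by blast

lemma Agr_span: "S \<subseteq> Agr \<gamma> \<Longrightarrow> vs.span S \<subseteq> Agr \<gamma>"
  using Agr_sub vs.span_minimal by blast

lemma D_add: "teq2 sc (\<Delta> (x + y)) (\<Delta> x @ \<Delta> y)"
  and D_sc: "teq2 sc (\<Delta> (sc s x)) (map (\<lambda>(u, v). (sc s u, v)) (\<Delta> x))"
  and eps_add: "\<epsilon> (x + y) = \<epsilon> x + \<epsilon> y"
  and eps_sc: "\<epsilon> (sc s x) = s * \<epsilon> x"
  and coassoc: "teq3 sc (cop_left \<Delta> (\<Delta> a)) (cop_right \<Delta> (\<Delta> a))"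
  and counitL: "sum_list (map (\<lambda>(x, y). sc (\<epsilon> x) y) (\<Delta> a)) = a"
  and counitR: "sum_list (map (\<lambda>(x, y). sc (\<epsilon> y) x) (\<Delta> a)) = a"
  and D_mult: "teq2 sc (\<Delta> (x * y)) (tmult (\<Delta> x) (\<Delta> y))"
  and D_one: "teq2 sc (\<Delta> 1) [(1, 1)]"
  and eps_mult: "\<epsilon> (x * y) = \<epsilon> x * \<epsilon> y"
  and eps_one: "\<epsilon> 1 = 1"
  using bia by (simp_all add: bialgebra_on_def)

lemma kl_add: "klinear sc f \<Longrightarrow> f (x + y) = f x + f y"
  and kl_sc: "klinear sc f \<Longrightarrow> f (sc c x) = c * f x"
  by (auto simp: klinear_def)

lemma kl_zero: "klinear sc f \<Longrightarrow> f 0 = 0"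
  using kl_sc[of f 0 0] by simp

lemma kl_sum: "klinear sc f \<Longrightarrow> f (sum g S) = (\<Sum>i\<in>S. f (g i))"
  by (induct S rule: infinite_finite_induct) (auto simp: kl_zero kl_add)

lemma kl_sum_list: "klinear sc f \<Longrightarrow> f (sum_list (map g xs)) = (\<Sum>i\<leftarrow>xs. f (g i))"
  by (induct xs) (auto simp: kl_zero kl_add)

lemma al_zero: "alin sc f \<Longrightarrow> f 0 = 0"
  unfolding alin_def by (metis vs.scale_zero_left)

lemma al_sum_list: "alin sc f \<Longrightarrow> f (sum_list (map g xs)) = (\<Sum>i\<leftarrow>xs. f (g i))"
  by (induct xs) (auto simp: al_zero alin_def)

lemma al_sum: "alin sc f \<Longrightarrow> f (sum g S) = (\<Sum>i\<in>S. f (g i))"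
  by (induct S rule: infinite_finite_induct) (auto simp: al_zero alin_def)

lemma alin_multR: "alin sc (\<lambda>x. x * y)"
  unfolding alin_def by (simp add: distrib_right kalg(1))

lemma alin_multL: "alin sc (\<lambda>x. y * x)"
  unfolding alin_def by (simp add: distrib_left kalg(2))

lemma eps_lin: "klinear sc \<epsilon>"
  by (simp add: klinear_def eps_add eps_sc)

lemma ev2_scmap: "bilinear_form sc B \<Longrightarrow> ev2 B (map (\<lambda>(u, v). (sc s u, v)) zs) = s * ev2 B zs"
  by (induct zs) (auto simp: bil_sc1 algebra_simps)

lemma E_lin: "bilinear_form sc B \<Longrightarrow> klinear sc (\<lambda>x. ev2 B (\<Delta> x))"
  unfolding klinear_def
proof safe
  fix x y assume B: "bilinear_form sc B"
  show "ev2 B (\<Delta> (x + y)) = ev2 B (\<Delta> x) + ev2 B (\<Delta> y)"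
    using D_add[of x y] B by (simp add: teq2_ev)
  fix c
  show "ev2 B (\<Delta> (sc c x)) = c * ev2 B (\<Delta> x)"
    using D_sc[of c x] B by (simp add: teq2_ev ev2_scmap)
qed

lemma H_bil: "trilinear_form sc T \<Longrightarrow> bilinear_form sc (\<lambda>x y. ev2 (\<lambda>u v. T u v y) (\<Delta> x))"
  unfolding bilinear_form_def
proof safe
  assume T: "trilinear_form sc T"
  show "klinear sc (\<lambda>x. ev2 (\<lambda>u v. T u v y) (\<Delta> x))" for y
    by (rule E_lin, rule tri_slice1, rule T)
  show "klinear sc (\<lambda>y. ev2 (\<lambda>u v. T u v y) (\<Delta> x))" for x
  proof -
    have a: "T u v (y + y') = T u v y + T u v y'" "T u v (sc c y) = c * T u v y" for u v y y' c
      using T by (auto simp: trilinear_form_def klinear_def)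
    show ?thesis unfolding klinear_def by (simp add: a ev2_add ev2_cmult)
  qed
qed

lemma K_bil: "trilinear_form sc T \<Longrightarrow> bilinear_form sc (\<lambda>x y. ev2 (\<lambda>u v. T x u v) (\<Delta> y))"
  unfolding bilinear_form_def
proof safe
  assume T: "trilinear_form sc T"
  show "klinear sc (\<lambda>y. ev2 (\<lambda>u v. T x u v) (\<Delta> y))" for x
    by (rule E_lin, rule tri_slice3, rule T)
  show "klinear sc (\<lambda>x. ev2 (\<lambda>u v. T x u v) (\<Delta> y))" for y
  proof -
    have a1: "T (x + x') u v = T x u v + T x' u v" "T (sc c x) u v = c * T x u v" for u v x x' c
      using T by (auto simp: trilinear_form_def klinear_def)
    have a: "T (x + x') = (\<lambda>u v. T x u v + T x' u v)" "T (sc c x) = (\<lambda>u v. c * T x u v)" for x x' c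
      by (intro ext, rule a1)+
    show ?thesis unfolding klinear_def
    proof (intro conjI allI)
      fix x x' show "ev2 (\<lambda>u v. T (x + x') u v) (\<Delta> y) = ev2 (\<lambda>u v. T x u v) (\<Delta> y) + ev2 (\<lambda>u v. T x' u v) (\<Delta> y)"
        unfolding a(1) by (rule ev2_add)
    next
      fix c x show "ev2 (\<lambda>u v. T (sc c x) u v) (\<Delta> y) = c * ev2 (\<lambda>u v. T x u v) (\<Delta> y)"
        unfolding a(2) by (rule ev2_cmult)
    qed
  qed
qed

lemma coassoc_ev: "trilinear_form sc T \<Longrightarrow>
   ev2 (\<lambda>x y. ev2 (\<lambda>u v. T u v y) (\<Delta> x)) (\<Delta> a) = ev2 (\<lambda>x y. ev2 (\<lambda>u v. T x u v) (\<Delta> y)) (\<Delta> a)"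
proof -
  assume T: "trilinear_form sc T"
  have "ev3 T (cop_left \<Delta> (\<Delta> a)) = ev3 T (cop_right \<Delta> (\<Delta> a))"
    by (rule teq3_D[OF coassoc T])
  then show ?thesis unfolding ev3_cop_left ev3_cop_right .
qed

lemma coassoc_rep: "trilinear_form sc T \<Longrightarrow> teq2 sc (\<Delta> a) zs \<Longrightarrow>
   ev2 (\<lambda>x y. ev2 (\<lambda>u v. T u v y) (\<Delta> x)) zs = ev2 (\<lambda>x y. ev2 (\<lambda>u v. T x u v) (\<Delta> y)) zs"
proof -
  assume T: "trilinear_form sc T" and z: "teq2 sc (\<Delta> a) zs"
  have "ev2 (\<lambda>x y. ev2 (\<lambda>u v. T u v y) (\<Delta> x)) zs = ev2 (\<lambda>x y. ev2 (\<lambda>u v. T u v y) (\<Delta> x)) (\<Delta> a)"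
    by (rule teq2_D[OF z H_bil[OF T], symmetric])
  also have "\<dots> = ev2 (\<lambda>x y. ev2 (\<lambda>u v. T x u v) (\<Delta> y)) (\<Delta> a)"
    by (rule coassoc_ev[OF T])
  also have "\<dots> = ev2 (\<lambda>x y. ev2 (\<lambda>u v. T x u v) (\<Delta> y)) zs"
    by (rule teq2_D[OF z K_bil[OF T]])
  finally show ?thesis .
qed

end


context cgb begin

abbreviation hc :: "real \<times> real \<Rightarrow> 'a \<Rightarrow> 'a" where "hc \<gamma> x \<equiv> hcomp Agr x \<gamma>"
abbreviation GS where "GS \<equiv> Gam_slope \<Gamma> \<mu>"
abbreviation GL where "GL \<equiv> Gam_le \<Gamma> \<mu>"
abbreviation pr :: "'a \<Rightarrow> 'a" where "pr x \<equiv> proj_slope \<Gamma> Agr \<mu> x"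
abbreviation supp :: "'a \<Rightarrow> (real \<times> real) set" where "supp x \<equiv> {\<gamma>. hcomp Agr x \<gamma> \<noteq> 0}"

lemma hc_spec: "finite (supp a) \<and> (\<forall>\<gamma>. hc \<gamma> a \<in> Agr \<gamma>) \<and> a = (\<Sum>\<gamma>\<in>supp a. hc \<gamma> a)"
  unfolding hcomp_def by (rule theI'[OF gd_ex1])

lemma hc_fin: "finite (supp a)" and hc_in: "hc \<gamma> a \<in> Agr \<gamma>"
  using hc_spec by blast+

lemma hc_decomp: "(\<Sum>\<gamma>\<in>supp a. hc \<gamma> a) = a"
  using hc_spec by metis

lemma hc_unique:
  assumes "finite S" "\<And>\<gamma>. f \<gamma> \<in> Agr \<gamma>" "\<And>\<gamma>. \<gamma> \<notin> S \<Longrightarrow> f \<gamma> = 0" "a = (\<Sum>\<gamma>\<in>S. f \<gamma>)"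
  shows "hcomp Agr a = f"
proof -
  have sub: "{\<gamma>. f \<gamma> \<noteq> 0} \<subseteq> S" using assms(3) by blast
  have fin: "finite {\<gamma>. f \<gamma> \<noteq> 0}" using finite_subset[OF sub assms(1)] .
  have "(\<Sum>\<gamma>\<in>S. f \<gamma>) = (\<Sum>\<gamma>\<in>{\<gamma>. f \<gamma> \<noteq> 0}. f \<gamma>)"
    by (rule sum.mono_neutral_right[OF assms(1) sub]) auto
  then have P: "finite {\<gamma>. f \<gamma> \<noteq> 0} \<and> (\<forall>\<gamma>. f \<gamma> \<in> Agr \<gamma>) \<and> a = (\<Sum>\<gamma>\<in>{\<gamma>. f \<gamma> \<noteq> 0}. f \<gamma>)"
    using fin assms by auto
  show ?thesis unfolding hcomp_def using the1_equality[OF gd_ex1[of a]] P by blast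
qed

lemma hc_sumS: "finite S \<Longrightarrow> supp a \<subseteq> S \<Longrightarrow> (\<Sum>\<gamma>\<in>S. hc \<gamma> a) = a"
proof -
  assume S: "finite S" "supp a \<subseteq> S"
  have "(\<Sum>\<gamma>\<in>supp a. hc \<gamma> a) = (\<Sum>\<gamma>\<in>S. hc \<gamma> a)"
    by (rule sum.mono_neutral_left[OF S(1) S(2)]) auto
  then show ?thesis using hc_decomp[of a] by simp
qed

lemma hc_add: "hc \<gamma> (x + y) = hc \<gamma> x + hc \<gamma> y"
proof -
  let ?S = "supp x \<union> supp y"
  have fS: "finite ?S" using hc_fin by auto
  have "hcomp Agr (x + y) = (\<lambda>\<gamma>. hc \<gamma> x + hc \<gamma> y)"
  proof (rule hc_unique[OF fS])
    show "hc \<gamma> x + hc \<gamma> y \<in> Agr \<gamma>" for \<gamma> by (simp add: Agr_add hc_in)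
    show "\<gamma> \<notin> ?S \<Longrightarrow> hc \<gamma> x + hc \<gamma> y = 0" for \<gamma> by auto
    have a: "(\<Sum>\<gamma>\<in>?S. hc \<gamma> x) = x" by (rule hc_sumS[OF fS]) auto
    have b: "(\<Sum>\<gamma>\<in>?S. hc \<gamma> y) = y" by (rule hc_sumS[OF fS]) auto
    show "x + y = (\<Sum>\<gamma>\<in>?S. hc \<gamma> x + hc \<gamma> y)" by (simp add: sum.distrib a b)
  qed
  then show ?thesis by simp
qed

lemma hc_sc: "hc \<gamma> (sc c x) = sc c (hc \<gamma> x)"
proof -
  let ?S = "supp x"
  have fS: "finite ?S" using hc_fin by auto
  have "hcomp Agr (sc c x) = (\<lambda>\<gamma>. sc c (hc \<gamma> x))"
  proof (rule hc_unique[OF fS])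
    show "sc c (hc \<gamma> x) \<in> Agr \<gamma>" for \<gamma> by (simp add: Agr_sc hc_in)
    show "\<gamma> \<notin> ?S \<Longrightarrow> sc c (hc \<gamma> x) = 0" for \<gamma> by auto
    have a: "(\<Sum>\<gamma>\<in>?S. hc \<gamma> x) = x" by (rule hc_sumS[OF fS]) auto
    show "sc c x = (\<Sum>\<gamma>\<in>?S. sc c (hc \<gamma> x))" by (simp add: vs.scale_sum_right[symmetric] a)
  qed
  then show ?thesis by simp
qed

lemma hc_hom: "x \<in> Agr l \<Longrightarrow> hc \<gamma> x = (if \<gamma> = l then x else 0)"
proof -
  assume x: "x \<in> Agr l"
  have "hcomp Agr x = (\<lambda>\<gamma>. if \<gamma> = l then x else 0)"
    by (rule hc_unique[of "{l}"]) (auto simp: x)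
  then show ?thesis by simp
qed

lemma hc_zero[simp]: "hc \<gamma> 0 = 0"
  using hc_hom[of 0 0 \<gamma>] by simp

lemma alin_hc: "alin sc (\<lambda>x. hc \<gamma> x)"
  by (simp add: alin_def hc_add hc_sc)

lemma hc_out: "\<gamma> \<notin> \<Gamma> \<Longrightarrow> hc \<gamma> x = 0"
  using hc_in[of x \<gamma>] Agr_out by auto

lemma pr_S: "finite S \<Longrightarrow> supp x \<subseteq> S \<Longrightarrow> pr x = (\<Sum>\<gamma>\<in>S \<inter> GS. hc \<gamma> x)"
  unfolding proj_slope_def
  by (rule sum.mono_neutral_left) auto

lemma pr_add: "pr (x + y) = pr x + pr y"
proof -
  let ?S = "supp x \<union> supp y \<union> supp (x + y)"
  have fS: "finite ?S" using hc_fin by auto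
  have "pr x = (\<Sum>\<gamma>\<in>?S \<inter> GS. hc \<gamma> x)" by (rule pr_S[OF fS]) auto
  moreover have "pr y = (\<Sum>\<gamma>\<in>?S \<inter> GS. hc \<gamma> y)" by (rule pr_S[OF fS]) auto
  moreover have "pr (x + y) = (\<Sum>\<gamma>\<in>?S \<inter> GS. hc \<gamma> (x + y))" by (rule pr_S[OF fS]) auto
  ultimately show ?thesis by (simp add: hc_add sum.distrib)
qed

lemma pr_sc: "pr (sc c x) = sc c (pr x)"
proof -
  let ?S = "supp x \<union> supp (sc c x)"
  have fS: "finite ?S" using hc_fin by auto
  have "pr x = (\<Sum>\<gamma>\<in>?S \<inter> GS. hc \<gamma> x)" by (rule pr_S[OF fS]) auto
  moreover have "pr (sc c x) = (\<Sum>\<gamma>\<in>?S \<inter> GS. hc \<gamma> (sc c x))" by (rule pr_S[OF fS]) auto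
  ultimately show ?thesis by (simp add: hc_sc vs.scale_sum_right)
qed

lemma alin_pr: "alin sc (\<lambda>x. pr x)"
  by (simp add: alin_def pr_add pr_sc)

lemma pr_hom: "x \<in> Agr l \<Longrightarrow> pr x = (if l \<in> GS then x else 0)"
proof -
  assume x: "x \<in> Agr l"
  have "pr x = (\<Sum>\<gamma>\<in>{l} \<inter> GS. hc \<gamma> x)"
    by (rule pr_S) (auto simp: hc_hom[OF x])
  then show ?thesis by (auto simp: hc_hom[OF x])
qed

lemma pr_zero[simp]: "pr 0 = 0"
  using pr_hom[of 0 0] by simp

lemma pr_slope: "x \<in> A_slope sc \<Gamma> Agr \<mu> \<Longrightarrow> pr x = x"
  unfolding A_slope_def
proof (induct rule: vs.span_induct_alt)
  case base then show ?case by simp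
next
  case (step c x y)
  then obtain l where "l \<in> GS" "x \<in> Agr l" by auto
  then have "pr x = x" using pr_hom by auto
  then show ?case using step by (simp add: pr_add pr_sc)
qed

lemma mu_cases: obtains "\<mu> = \<infinity>" | m where "\<mu> = ereal m"
  using mu by (cases \<mu>) auto

lemma fst_nonneg: "\<gamma> \<in> \<Gamma> \<Longrightarrow> fst \<gamma> \<ge> 0"
  using dsm(1) by (cases \<gamma>) (force simp: halfplane_def)

lemma fst0_snd: "\<gamma> \<in> \<Gamma> \<Longrightarrow> fst \<gamma> = 0 \<Longrightarrow> snd \<gamma> \<ge> 0"
  using dsm(1) by (cases \<gamma>) (force simp: halfplane_def)

lemma GS_inf: "\<mu> = \<infinity> \<Longrightarrow> \<gamma> \<in> GS \<longleftrightarrow> \<gamma> \<in> \<Gamma> \<and> fst \<gamma> = 0"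
  by (cases \<gamma>) (auto simp: Gam_slope_def)

lemma GS_fin: "\<mu> = ereal m \<Longrightarrow> \<gamma> \<in> GS \<longleftrightarrow> \<gamma> \<in> \<Gamma> \<and> snd \<gamma> = m * fst \<gamma>"
  by (cases \<gamma>) (auto simp: Gam_slope_def)

lemma GL_inf: "\<mu> = \<infinity> \<Longrightarrow> \<gamma> \<in> GL \<longleftrightarrow> \<gamma> \<in> \<Gamma>"
proof
  assume "\<gamma> \<in> GL" then show "\<gamma> \<in> \<Gamma>" by (auto simp: Gam_le_def Gam_slope_def)
next
  assume inf: "\<mu> = \<infinity>" and g: "\<gamma> \<in> \<Gamma>"
  obtain r d where rd: "\<gamma> = (r, d)" by (cases \<gamma>)
  show "\<gamma> \<in> GL"
  proof (cases "r = 0")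
    case True
    then have "\<gamma> \<in> Gam_slope \<Gamma> \<infinity>" using g rd by (simp add: Gam_slope_def)
    then show ?thesis unfolding Gam_le_def by (intro UN_I[of "\<infinity>"]) (use inf in auto)
  next
    case False
    then have "\<gamma> \<in> Gam_slope \<Gamma> (ereal (d / r))" using g rd by (simp add: Gam_slope_def)
    then show ?thesis unfolding Gam_le_def using inf by force
  qed
qed

lemma GL_fin: "\<mu> = ereal m \<Longrightarrow> \<gamma> \<in> GL \<longleftrightarrow> \<gamma> \<in> \<Gamma> \<and> snd \<gamma> \<le> m * fst \<gamma>"
proof
  assume m: "\<mu> = ereal m" and "\<gamma> \<in> GL"
  then obtain \<nu> where nu: "\<nu> \<noteq> -\<infinity>" "\<nu> \<le> ereal m" "\<gamma> \<in> Gam_slope \<Gamma> \<nu>"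
    by (auto simp: Gam_le_def)
  then obtain n where n: "\<nu> = ereal n" by (cases \<nu>) auto
  obtain r d where rd: "\<gamma> = (r, d)" by (cases \<gamma>)
  have g: "\<gamma> \<in> \<Gamma>" "d = n * r" using nu n rd by (auto simp: Gam_slope_def)
  have "r \<ge> 0" using fst_nonneg[OF g(1)] rd by simp
  moreover have "n \<le> m" using nu n by simp
  ultimately have "n * r \<le> m * r" by (simp add: mult_right_mono)
  then show "\<gamma> \<in> \<Gamma> \<and> snd \<gamma> \<le> m * fst \<gamma>" using g rd by simp
next
  assume m: "\<mu> = ereal m" and h: "\<gamma> \<in> \<Gamma> \<and> snd \<gamma> \<le> m * fst \<gamma>"
  obtain r d where rd: "\<gamma> = (r, d)" by (cases \<gamma>)
  have g: "\<gamma> \<in> \<Gamma>" "d \<le> m * r" using h rd by auto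
  have r0: "r \<ge> 0" using fst_nonneg[OF g(1)] rd by simp
  show "\<gamma> \<in> GL"
  proof (cases "r = 0")
    case True
    then have "d \<ge> 0" using fst0_snd[OF g(1)] rd by simp
    then have "d = 0" using g True by simp
    then have "\<gamma> \<in> Gam_slope \<Gamma> (ereal m)" using g rd True by (simp add: Gam_slope_def)
    then show ?thesis unfolding Gam_le_def using m by force
  next
    case False
    then have rp: "r > 0" using r0 by simp
    have "\<gamma> \<in> Gam_slope \<Gamma> (ereal (d / r))" using g rd False by (simp add: Gam_slope_def)
    moreover have "d / r \<le> m" using rp g by (simp add: pos_divide_le_eq)
    ultimately show ?thesis unfolding Gam_le_def by (intro UN_I[of "ereal (d / r)"]) (use m in auto)
  qed
qed

lemma GS_in: "\<gamma> \<in> GS \<Longrightarrow> \<gamma> \<in> \<Gamma>"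
  by (cases \<gamma>) (auto simp: Gam_slope_def)

lemma GL_in: "\<gamma> \<in> GL \<Longrightarrow> \<gamma> \<in> \<Gamma>"
  by (auto simp: Gam_le_def Gam_slope_def)

lemma GS_add: assumes "\<beta> \<in> GS" "\<gamma> \<in> GS" shows "\<beta> + \<gamma> \<in> GS"
proof (cases rule: mu_cases)
  case 1 show ?thesis using assms unfolding GS_inf[OF 1] by (simp add: dsm(3))
next
  case (2 m) show ?thesis using assms unfolding GS_fin[OF 2] by (simp add: dsm(3) distrib_left)
qed

lemma GL_add: assumes "\<beta> \<in> GL" "\<gamma> \<in> GL" shows "\<beta> + \<gamma> \<in> GL"
proof (cases rule: mu_cases)
  case 1 show ?thesis using assms unfolding GL_inf[OF 1] by (simp add: dsm(3))
next
  case (2 m) show ?thesis using assms unfolding GL_fin[OF 2] by (simp add: dsm(3) distrib_left add_mono)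
qed

lemma GS_GL: assumes "\<beta> \<in> GS" shows "\<beta> \<in> GL"
proof (cases rule: mu_cases)
  case 1 show ?thesis using assms unfolding GL_inf[OF 1] GS_inf[OF 1] by simp
next
  case (2 m) show ?thesis using assms unfolding GL_fin[OF 2] GS_fin[OF 2] by simp
qed

lemma GS_zero: "0 \<in> GS"
proof (cases rule: mu_cases)
  case 1 show ?thesis unfolding GS_inf[OF 1] by (simp add: dsm(2))
next
  case (2 m) show ?thesis unfolding GS_fin[OF 2] by (simp add: dsm(2))
qed

lemma GS_sub: assumes "l1 + l2 \<in> GS" "l1 \<in> GS" "l2 \<in> \<Gamma>" shows "l2 \<in> GS"
proof (cases rule: mu_cases)
  case 1 show ?thesis using assms unfolding GS_inf[OF 1] by simp
next
  case (2 m) show ?thesis using assms unfolding GS_fin[OF 2] by (simp add: algebra_simps)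
qed

lemma GL_split: assumes "a \<in> GL" "b \<in> GL" "a + b \<in> GS" shows "a \<in> GS \<and> b \<in> GS"
proof (cases rule: mu_cases)
  case 1 show ?thesis using assms fst_nonneg[of a] fst_nonneg[of b] unfolding GS_inf[OF 1] GL_inf[OF 1] by simp
next
  case (2 m) show ?thesis using assms unfolding GS_fin[OF 2] GL_fin[OF 2] by (simp add: algebra_simps)
qed

lemma GL_bad: assumes "\<beta> \<in> GS" "\<beta>2 \<in> \<Gamma>" "\<beta>2 \<notin> GL" shows "\<beta> + \<beta>2 \<notin> GL"
proof (cases rule: mu_cases)
  case 1 show ?thesis using assms unfolding GL_inf[OF 1] by simp
next
  case (2 m) show ?thesis using assms unfolding GS_fin[OF 2] GL_fin[OF 2] by (simp add: algebra_simps dsm(3))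
qed

end


lemma teq2_refl: "teq2 sc xs xs" by (simp add: teq2_ev)
lemma teq2_sym: "teq2 sc xs ys \<Longrightarrow> teq2 sc ys xs" by (simp add: teq2_ev)
lemma teq2_trans: "teq2 sc xs ys \<Longrightarrow> teq2 sc ys zs \<Longrightarrow> teq2 sc xs zs" by (simp add: teq2_ev)


context cgb begin

lemma bil_zero1: "bilinear_form sc B \<Longrightarrow> B 0 y = 0"
  using bil_sc1[of sc B 0 0 y] by simp
lemma bil_zero2: "bilinear_form sc B \<Longrightarrow> B x 0 = 0"
  using bil_sc2[of sc B x 0 0] by simp

lemma tm_bil1: "bilinear_form sc B \<Longrightarrow> bilinear_form sc (\<lambda>a b. ev2 (\<lambda>u v. B (a * u) (b * v)) W)"
proof -
  assume B: "bilinear_form sc B"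
  have "bilinear_form sc (\<lambda>a b. B (a * u) (b * v))" for u v
    by (rule bil_comp[OF B alin_multR alin_multR])
  then show ?thesis
    by (induct W) (auto simp: bilinear_form_def klinear_def algebra_simps)
qed

lemma tm_bil2: "bilinear_form sc B \<Longrightarrow> bilinear_form sc (\<lambda>u v. ev2 (\<lambda>a b. B (a * u) (b * v)) Z)"
proof -
  assume B: "bilinear_form sc B"
  have "bilinear_form sc (\<lambda>u v. B (a * u) (b * v))" for a b
    by (rule bil_comp[OF B alin_multL alin_multL])
  then show ?thesis
    by (induct Z) (auto simp: bilinear_form_def klinear_def algebra_simps)
qed

lemma tmult_teq: "teq2 sc zs zs' \<Longrightarrow> teq2 sc ws ws' \<Longrightarrow> teq2 sc (tmult zs ws) (tmult zs' ws')"
proof (rule teq2I)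
  fix B assume z: "teq2 sc zs zs'" and w: "teq2 sc ws ws'" and B: "bilinear_form sc B"
  have "ev2 B (tmult zs ws) = ev2 (\<lambda>x y. ev2 (\<lambda>u v. B (x * u) (y * v)) ws) zs" by (rule ev2_tmult)
  also have "\<dots> = ev2 (\<lambda>x y. ev2 (\<lambda>u v. B (x * u) (y * v)) ws) zs'" by (rule teq2_D[OF z tm_bil1[OF B]])
  also have "\<dots> = ev2 (\<lambda>u v. ev2 (\<lambda>x y. B (x * u) (y * v)) zs') ws" by (rule ev2_swap)
  also have "\<dots> = ev2 (\<lambda>u v. ev2 (\<lambda>x y. B (x * u) (y * v)) zs') ws'" by (rule teq2_D[OF w tm_bil2[OF B]])
  also have "\<dots> = ev2 (\<lambda>x y. ev2 (\<lambda>u v. B (x * u) (y * v)) ws') zs'" by (rule ev2_swap[symmetric])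
  also have "\<dots> = ev2 B (tmult zs' ws')" by (rule ev2_tmult[symmetric])
  finally show "ev2 B (tmult zs ws) = ev2 B (tmult zs' ws')" .
qed

definition hrep :: "real \<times> real \<Rightarrow> (((real \<times> real) \<times> (real \<times> real)) \<times> ('a \<times> 'a)) list \<Rightarrow> bool" where
  "hrep \<gamma> L \<longleftrightarrow> (\<forall>l1 l2 x y. ((l1, l2), (x, y)) \<in> set L \<longrightarrow>
     l1 + l2 = \<gamma> \<and> x \<in> Agr l1 \<and> y \<in> Agr l2 \<and> l1 \<in> \<Gamma> \<and> l2 \<in> \<Gamma>)"

lemma hrepD: "hrep \<gamma> L \<Longrightarrow> ((l1, l2), (x, y)) \<in> set L \<Longrightarrow>
     l1 + l2 = \<gamma> \<and> x \<in> Agr l1 \<and> y \<in> Agr l2 \<and> l1 \<in> \<Gamma> \<and> l2 \<in> \<Gamma>"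
  unfolding hrep_def by blast

lemma ev2_filter_nz: "bilinear_form sc B \<Longrightarrow> ev2 B (filter (\<lambda>(x, y). x \<noteq> 0 \<and> y \<noteq> 0) zs) = ev2 B zs"
  by (induct zs) (auto simp: bil_zero1 bil_zero2)

lemma hrep_exists:
  assumes a: "a \<in> Agr \<gamma>"
  shows "\<exists>L. hrep \<gamma> L \<and> teq2 sc (\<Delta> a) (map snd L)"
proof -
  obtain zs where zs: "teq2 sc (\<Delta> a) zs"
    and h: "\<forall>(x, y)\<in>set zs. \<exists>\<beta> \<beta>'. \<beta> + \<beta>' = \<gamma> \<and> x \<in> Agr \<beta> \<and> y \<in> Agr \<beta>'"
    using Delta_hom[OF a] by blast
  define P where "P = (\<lambda>z l. fst l + snd l = \<gamma> \<and> fst z \<in> Agr (fst l) \<and> snd z \<in> Agr (snd l))"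
  define lab where "lab = (\<lambda>z. SOME l. P z l)"
  have labP: "P z (lab z)" if "z \<in> set zs" for z
  proof -
    obtain x y where z: "z = (x, y)" by (cases z)
    have "(x, y) \<in> set zs" using that z by simp
    from bspec[OF h this] have "\<exists>\<beta> \<beta>'. \<beta> + \<beta>' = \<gamma> \<and> x \<in> Agr \<beta> \<and> y \<in> Agr \<beta>'" by simp
    then obtain \<beta> \<beta>' where "\<beta> + \<beta>' = \<gamma> \<and> x \<in> Agr \<beta> \<and> y \<in> Agr \<beta>'" by blast
    then have "P z (\<beta>, \<beta>')" using z by (simp add: P_def)
    then show ?thesis unfolding lab_def by (rule someI)
  qed
  define zs' where "zs' = filter (\<lambda>(x, y). x \<noteq> 0 \<and> y \<noteq> 0) zs"
  define L where "L = map (\<lambda>z. (lab z, z)) zs'"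
  have "hrep \<gamma> L" unfolding hrep_def
  proof (intro allI impI)
    fix l1 l2 x y assume "((l1, l2), (x, y)) \<in> set L"
    then have m: "(x, y) \<in> set zs" "x \<noteq> 0" "y \<noteq> 0" "lab (x, y) = (l1, l2)"
      by (auto simp: L_def zs'_def)
    have "P (x, y) (l1, l2)" using labP[OF m(1)] m(4) by simp
    then have p: "l1 + l2 = \<gamma>" "x \<in> Agr l1" "y \<in> Agr l2" by (auto simp: P_def)
    have "l1 \<in> \<Gamma>" using p(2) m(2) Agr_out[of l1] by auto
    moreover have "l2 \<in> \<Gamma>" using p(3) m(3) Agr_out[of l2] by auto
    ultimately show "l1 + l2 = \<gamma> \<and> x \<in> Agr l1 \<and> y \<in> Agr l2 \<and> l1 \<in> \<Gamma> \<and> l2 \<in> \<Gamma>" using p by simp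
  qed
  moreover have "teq2 sc (\<Delta> a) (map snd L)"
  proof (rule teq2I)
    fix B assume B: "bilinear_form sc B"
    have "map snd L = zs'" by (simp add: L_def comp_def)
    then have "ev2 B (map snd L) = ev2 B zs" using ev2_filter_nz[OF B] by (simp add: zs'_def)
    then show "ev2 B (\<Delta> a) = ev2 B (map snd L)" using teq2_D[OF zs B] by simp
  qed
  ultimately show ?thesis by blast
qed

lemma ev2_hc_label:
  assumes B: "bilinear_form sc B" and L: "hrep \<gamma> L"
  shows "ev2 (\<lambda>x y. B (hc l1 x) (hc l2 y)) (map snd L) = ev2 B (map snd (filter (\<lambda>e. fst e = (l1, l2)) L))"
proof (rule ev2_filter_label)
  fix l x y assume e: "(l, (x, y)) \<in> set L"
  obtain m1 m2 where l: "l = (m1, m2)" by (cases l)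
  have h: "x \<in> Agr m1" "y \<in> Agr m2" using hrepD[OF L e[unfolded l]] by auto
  show "B (hc l1 x) (hc l2 y) = (if l = (l1, l2) then B x y else 0)"
    using h l by (auto simp: hc_hom bil_zero1[OF B] bil_zero2[OF B])
qed

lemma ev2_pr_label:
  assumes B: "bilinear_form sc B" and L: "hrep \<gamma> L"
  shows "ev2 (\<lambda>x y. B (pr x) (pr y)) (map snd L) = ev2 B (map snd (filter (\<lambda>e. fst (fst e) \<in> GS \<and> snd (fst e) \<in> GS) L))"
proof (rule ev2_filter_label)
  fix l x y assume e: "(l, (x, y)) \<in> set L"
  obtain m1 m2 where l: "l = (m1, m2)" by (cases l)
  have h: "x \<in> Agr m1" "y \<in> Agr m2" using hrepD[OF L e[unfolded l]] by auto
  show "B (pr x) (pr y) = (if fst l \<in> GS \<and> snd l \<in> GS then B x y else 0)"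
    using h l by (auto simp: pr_hom bil_zero1[OF B] bil_zero2[OF B])
qed

lemma hc_label_zero:
  assumes B: "bilinear_form sc B" and L: "hrep \<gamma> L" and nb: "\<And>e. e \<in> set L \<Longrightarrow> fst (fst e) \<noteq> \<beta>"
  shows "ev2 (\<lambda>x y. B (hc \<beta> x) (hc \<gamma>' y)) (map snd L) = 0"
proof -
  have "filter (\<lambda>e. fst e = (\<beta>, \<gamma>')) L = []"
    using nb by (force simp: filter_empty_conv)
  then show ?thesis using ev2_hc_label[OF B L] by simp
qed

lemma ssI:
  assumes a: "a \<in> Agr \<gamma>0" "\<gamma>0 \<in> GS"
    and z: "\<And>\<beta> \<gamma> B. \<beta> \<notin> GL \<Longrightarrow> bilinear_form sc B \<Longrightarrow> ev2 (\<lambda>x y. B (hc \<beta> x) (hc \<gamma> y)) (\<Delta> a) = 0"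
  shows "semistable sc \<Gamma> Agr \<Delta> \<mu> a"
  unfolding semistable_def
proof
  show "\<exists>\<gamma>\<in>GS. a \<in> Agr \<gamma>" using a by blast
  show "Lset sc Agr \<Delta> a \<subseteq> GL"
  proof
    fix \<beta> assume "\<beta> \<in> Lset sc Agr \<Delta> a"
    then obtain \<gamma> where ne: "\<not> teq2 sc (map (\<lambda>(x, y). (hc \<beta> x, hc \<gamma> y)) (\<Delta> a)) []"
      by (auto simp: Lset_def)
    show "\<beta> \<in> GL"
    proof (rule ccontr)
      assume "\<beta> \<notin> GL"
      then have "teq2 sc (map (\<lambda>(x, y). (hc \<beta> x, hc \<gamma> y)) (\<Delta> a)) []"
        by (intro teq2I) (simp add: ev2_map z)
      then show False using ne by simp
    qed
  qed
qed

lemma ss_zeroD: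
  assumes "semistable sc \<Gamma> Agr \<Delta> \<mu> a" "\<beta> \<notin> GL" "bilinear_form sc B"
  shows "ev2 (\<lambda>x y. B (hc \<beta> x) (hc \<gamma> y)) (\<Delta> a) = 0"
proof -
  have "\<beta> \<notin> Lset sc Agr \<Delta> a" using assms(1,2) by (auto simp: semistable_def)
  then have "teq2 sc (map (\<lambda>(x, y). (hc \<beta> x, hc \<gamma> y)) (\<Delta> a)) []" unfolding Lset_def by blast
  from teq2_D[OF this assms(3)] show ?thesis by (simp add: ev2_map)
qed

definition goodrep :: "real \<times> real \<Rightarrow> 'a \<Rightarrow> (((real \<times> real) \<times> (real \<times> real)) \<times> ('a \<times> 'a)) list \<Rightarrow> bool" where
  "goodrep \<gamma> a L \<longleftrightarrow> hrep \<gamma> L \<and> (\<forall>e\<in>set L. fst (fst e) \<in> GL) \<and> teq2 sc (\<Delta> a) (map snd L)"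

lemma ss_from_rep:
  assumes a: "a \<in> Agr \<gamma>0" "\<gamma>0 \<in> GS" and L: "goodrep \<gamma>0 a L"
  shows "semistable sc \<Gamma> Agr \<Delta> \<mu> a"
proof (rule ssI[OF a])
  fix \<beta> \<gamma> and B :: "'a \<Rightarrow> 'a \<Rightarrow> 'k" assume b: "\<beta> \<notin> GL" and B: "bilinear_form sc B"
  have h: "hrep \<gamma>0 L" "\<forall>e\<in>set L. fst (fst e) \<in> GL" "teq2 sc (\<Delta> a) (map snd L)"
    using L by (auto simp: goodrep_def)
  have "ev2 (\<lambda>x y. B (hc \<beta> x) (hc \<gamma> y)) (\<Delta> a) = ev2 (\<lambda>x y. B (hc \<beta> x) (hc \<gamma> y)) (map snd L)"
    by (rule teq2_D[OF h(3) bil_comp[OF B alin_hc alin_hc]])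
  also have "\<dots> = 0" by (rule hc_label_zero[OF B h(1)]) (use h(2) b in auto)
  finally show "ev2 (\<lambda>x y. B (hc \<beta> x) (hc \<gamma> y)) (\<Delta> a) = 0" .
qed

lemma ss_rep:
  assumes ss: "semistable sc \<Gamma> Agr \<Delta> \<mu> a" and a: "a \<in> Agr \<gamma>0"
  shows "\<exists>L. goodrep \<gamma>0 a L"
proof -
  obtain L where L: "hrep \<gamma>0 L" "teq2 sc (\<Delta> a) (map snd L)" using hrep_exists[OF a] by blast
  define L' where "L' = filter (\<lambda>e. fst (fst e) \<in> GL) L"
  define Lb where "Lb = filter (\<lambda>e. fst (fst e) \<notin> GL) L"
  have hL': "hrep \<gamma>0 L'" using L(1) by (auto simp: hrep_def L'_def)
  have "teq2 sc (\<Delta> a) (map snd L')"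
  proof (rule teq2I)
    fix B :: "'a \<Rightarrow> 'a \<Rightarrow> 'k" assume B: "bilinear_form sc B"
    have split: "ev2 B (map snd L) = ev2 B (map snd L') + ev2 B (map snd Lb)"
      unfolding L'_def Lb_def by (induct L) auto
    have "ev2 B (map snd Lb) = (\<Sum>l\<in>set (map fst Lb). ev2 B (map snd (filter (\<lambda>e. fst e = l) Lb)))"
      by (rule ev2_group)
    also have "\<dots> = 0"
    proof (rule sum.neutral, rule ballI)
      fix l assume "l \<in> set (map fst Lb)"
      obtain l1 l2 where l: "l = (l1, l2)" by (cases l)
      have l1: "l1 \<notin> GL" using \<open>l \<in> set (map fst Lb)\<close> l by (auto simp: Lb_def)
      have "filter (\<lambda>e. fst e = l) Lb = filter (\<lambda>e. fst e = (l1, l2)) L"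
        unfolding Lb_def l using l1 by (induct L) auto
      then have "ev2 B (map snd (filter (\<lambda>e. fst e = l) Lb)) = ev2 (\<lambda>x y. B (hc l1 x) (hc l2 y)) (map snd L)"
        using ev2_hc_label[OF B L(1)] by simp
      also have "\<dots> = ev2 (\<lambda>x y. B (hc l1 x) (hc l2 y)) (\<Delta> a)"
        by (rule teq2_D[OF L(2) bil_comp[OF B alin_hc alin_hc], symmetric])
      also have "\<dots> = 0" by (rule ss_zeroD[OF ss l1 B])
      finally show "ev2 B (map snd (filter (\<lambda>e. fst e = l) Lb)) = 0" .
    qed
    finally have "ev2 B (map snd Lb) = 0" .
    then show "ev2 B (\<Delta> a) = ev2 B (map snd L')" using split teq2_D[OF L(2) B] by simp
  qed
  moreover have "\<forall>e\<in>set L'. fst (fst e) \<in> GL" by (simp add: L'_def)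
  ultimately show ?thesis unfolding goodrep_def using hL' by blast
qed

end


context cgb begin

abbreviation V where "V \<equiv> A_ss sc \<Gamma> Agr \<Delta> \<mu>"
abbreviation SSet where "SSet \<equiv> {a. semistable sc \<Gamma> Agr \<Delta> \<mu> a}"
abbreviation Dm where "Dm a \<equiv> Delta_slope \<Gamma> Agr \<Delta> \<mu> a"

lemma V_slope: "V \<subseteq> A_slope sc \<Gamma> Agr \<mu>"
  unfolding A_ss_def A_slope_def by (rule vs.span_mono) (auto simp: semistable_def)

lemma V_sub: "vs.subspace V"
  unfolding A_ss_def by (rule vs.subspace_span)

lemma SSet_V: "a \<in> SSet \<Longrightarrow> a \<in> V"
  unfolding A_ss_def by (rule vs.span_base)

definition lmul :: "(((real \<times> real) \<times> (real \<times> real)) \<times> ('a \<times> 'a)) list \<Rightarrow> (((real \<times> real) \<times> (real \<times> real)) \<times> ('a \<times> 'a)) list \<Rightarrow> (((real \<times> real) \<times> (real \<times> real)) \<times> ('a \<times> 'a)) list" where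
  "lmul L M = concat (map (\<lambda>e. map (\<lambda>f. (fst e + fst f, (fst (snd e) * fst (snd f), snd (snd e) * snd (snd f)))) M) L)"

lemma lmul_snd: "map snd (lmul L M) = tmult (map snd L) (map snd M)"
proof (induct L)
  case Nil then show ?case by (simp add: lmul_def tmult_def)
next
  case (Cons e L)
  have "map snd (map (\<lambda>f. (fst e + fst f, (fst (snd e) * fst (snd f), snd (snd e) * snd (snd f)))) M)
     = map (\<lambda>(u, v). (fst (snd e) * u, snd (snd e) * v)) (map snd M)"
    by (induct M) auto
  with Cons show ?case by (cases e) (auto simp: lmul_def tmult_def)
qed

lemma lmul_mem: "g \<in> set (lmul L M) \<Longrightarrow> \<exists>e\<in>set L. \<exists>f\<in>set M.
    g = (fst e + fst f, (fst (snd e) * fst (snd f), snd (snd e) * snd (snd f)))"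
  by (auto simp: lmul_def)

lemma lmul_hrep: "hrep \<gamma>1 L \<Longrightarrow> hrep \<gamma>2 M \<Longrightarrow> hrep (\<gamma>1 + \<gamma>2) (lmul L M)"
  unfolding hrep_def
proof (intro allI impI)
  fix l1 l2 x y
  assume L: "\<forall>l1 l2 x y. ((l1, l2), x, y) \<in> set L \<longrightarrow> l1 + l2 = \<gamma>1 \<and> x \<in> Agr l1 \<and> y \<in> Agr l2 \<and> l1 \<in> \<Gamma> \<and> l2 \<in> \<Gamma>"
    and M: "\<forall>l1 l2 x y. ((l1, l2), x, y) \<in> set M \<longrightarrow> l1 + l2 = \<gamma>2 \<and> x \<in> Agr l1 \<and> y \<in> Agr l2 \<and> l1 \<in> \<Gamma> \<and> l2 \<in> \<Gamma>"
    and g: "((l1, l2), x, y) \<in> set (lmul L M)"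
  obtain e f where ef: "e \<in> set L" "f \<in> set M"
    "((l1, l2), x, y) = (fst e + fst f, (fst (snd e) * fst (snd f), snd (snd e) * snd (snd f)))"
    using lmul_mem[OF g] by blast
  obtain a1 a2 x1 y1 where e: "e = ((a1, a2), (x1, y1))" by (metis prod.collapse)
  obtain b1 b2 x2 y2 where f: "f = ((b1, b2), (x2, y2))" by (metis prod.collapse)
  have he: "a1 + a2 = \<gamma>1 \<and> x1 \<in> Agr a1 \<and> y1 \<in> Agr a2 \<and> a1 \<in> \<Gamma> \<and> a2 \<in> \<Gamma>" using L ef(1) e by blast
  have hf: "b1 + b2 = \<gamma>2 \<and> x2 \<in> Agr b1 \<and> y2 \<in> Agr b2 \<and> b1 \<in> \<Gamma> \<and> b2 \<in> \<Gamma>" using M ef(2) f by blast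
  have eq: "l1 = a1 + b1" "l2 = a2 + b2" "x = x1 * x2" "y = y1 * y2" using ef(3) e f by auto
  show "l1 + l2 = \<gamma>1 + \<gamma>2 \<and> x \<in> Agr l1 \<and> y \<in> Agr l2 \<and> l1 \<in> \<Gamma> \<and> l2 \<in> \<Gamma>"
    using he hf eq by (auto simp: Agr_mult dsm(3) add_ac)
qed

lemma lmul_left: "\<forall>e\<in>set L. fst (fst e) \<in> GL \<Longrightarrow> \<forall>e\<in>set M. fst (fst e) \<in> GL \<Longrightarrow> \<forall>e\<in>set (lmul L M). fst (fst e) \<in> GL"
  by (auto simp: lmul_def GL_add)

lemma goodrep_mult: "goodrep \<gamma>1 x L \<Longrightarrow> goodrep \<gamma>2 y M \<Longrightarrow> goodrep (\<gamma>1 + \<gamma>2) (x * y) (lmul L M)"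
  unfolding goodrep_def
proof (elim conjE, intro conjI)
  assume "hrep \<gamma>1 L" "hrep \<gamma>2 M" then show "hrep (\<gamma>1 + \<gamma>2) (lmul L M)" by (rule lmul_hrep)
next
  assume "\<forall>e\<in>set L. fst (fst e) \<in> GL" "\<forall>e\<in>set M. fst (fst e) \<in> GL"
  then show "\<forall>e\<in>set (lmul L M). fst (fst e) \<in> GL" by (rule lmul_left)
next
  assume "teq2 sc (\<Delta> x) (map snd L)" "teq2 sc (\<Delta> y) (map snd M)"
  then have "teq2 sc (tmult (\<Delta> x) (\<Delta> y)) (map snd (lmul L M))"
    unfolding lmul_snd by (rule tmult_teq)
  then show "teq2 sc (\<Delta> (x * y)) (map snd (lmul L M))" by (rule teq2_trans[OF D_mult])
qed

lemma ss_homD: "semistable sc \<Gamma> Agr \<Delta> \<mu> a \<Longrightarrow> \<exists>\<gamma>\<in>GS. a \<in> Agr \<gamma>"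
  by (simp add: semistable_def)

lemma ss_mult:
  assumes x: "semistable sc \<Gamma> Agr \<Delta> \<mu> x" and y: "semistable sc \<Gamma> Agr \<Delta> \<mu> y"
  shows "semistable sc \<Gamma> Agr \<Delta> \<mu> (x * y)"
proof -
  obtain \<gamma>1 where g1: "\<gamma>1 \<in> GS" "x \<in> Agr \<gamma>1" using ss_homD[OF x] by blast
  obtain \<gamma>2 where g2: "\<gamma>2 \<in> GS" "y \<in> Agr \<gamma>2" using ss_homD[OF y] by blast
  obtain L where L: "goodrep \<gamma>1 x L" using ss_rep[OF x g1(2)] by blast
  obtain M where M: "goodrep \<gamma>2 y M" using ss_rep[OF y g2(2)] by blast
  show ?thesis
    by (rule ss_from_rep[OF Agr_mult[OF g1(2) g2(2)] GS_add[OF g1(1) g2(1)] goodrep_mult[OF L M]])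
qed

lemma one_Agr0: "1 \<in> Agr 0"
  unfolding Agr0 by (rule range_eqI[of _ _ 1]) simp

lemma ss_one: "semistable sc \<Gamma> Agr \<Delta> \<mu> 1"
proof (rule ss_from_rep[OF one_Agr0 GS_zero])
  show "goodrep 0 1 [((0, 0), (1, 1))]"
    unfolding goodrep_def hrep_def
    using one_Agr0 dsm(2) GS_GL[OF GS_zero] D_one by auto
qed

lemma V_one: "1 \<in> V"
  by (rule SSet_V) (simp add: ss_one)

lemma V_zero: "0 \<in> V"
  unfolding A_ss_def by (rule vs.span_zero)

lemma V_add: "x \<in> V \<Longrightarrow> y \<in> V \<Longrightarrow> x + y \<in> V"
  unfolding A_ss_def by (rule vs.span_add)

lemma V_sc: "x \<in> V \<Longrightarrow> sc c x \<in> V"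
  unfolding A_ss_def by (rule vs.span_scale)

lemma V_mult_ss: assumes x: "x \<in> SSet" and y: "y \<in> V" shows "x * y \<in> V"
  using y unfolding A_ss_def
proof (induct rule: vs.span_induct_alt)
  case base then show ?case by (simp add: vs.span_zero)
next
  case (step c s y)
  have "x * s \<in> vs.span SSet" using x step(1) ss_mult by (auto intro: vs.span_base)
  then have "sc c (x * s) + x * y \<in> vs.span SSet" using step(2) by (intro vs.span_add vs.span_scale)
  then show ?case by (simp add: distrib_left kalg(2))
qed

lemma V_mult: assumes x: "x \<in> V" and y: "y \<in> V" shows "x * y \<in> V"
  using x unfolding A_ss_def
proof (induct rule: vs.span_induct_alt)
  case base then show ?case by (simp add: vs.span_zero)
next
  case (step c s x)
  have "s * y \<in> vs.span SSet" using V_mult_ss[of s y] step(1) y by (simp add: A_ss_def)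
  then have "sc c (s * y) + x * y \<in> vs.span SSet" using step(2) by (intro vs.span_add vs.span_scale)
  then show ?case by (simp add: distrib_right kalg(1))
qed

lemma ev2_Dm: "ev2 B (Dm a) = ev2 (\<lambda>x y. B (pr x) (pr y)) (\<Delta> a)"
  unfolding Delta_slope_def by (rule ev2_map)

lemma Em_lin: "bilinear_form sc B \<Longrightarrow> klinear sc (\<lambda>a. ev2 B (Dm a))"
  unfolding ev2_Dm by (rule E_lin, rule bil_comp[OF _ alin_pr alin_pr])

lemma Dm_add: "teq2 sc (Dm (x + y)) (Dm x @ Dm y)"
  by (rule teq2I) (simp add: kl_add[OF Em_lin])

lemma Dm_sc: "teq2 sc (Dm (sc s x)) (map (\<lambda>(u, v). (sc s u, v)) (Dm x))"
  by (rule teq2I) (simp add: kl_sc[OF Em_lin] ev2_scmap)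

lemma Dm_zero: "teq2 sc (Dm 0) []"
  by (rule teq2I) (simp add: kl_zero[OF Em_lin])

lemma eps_pr: "\<epsilon> (pr x) = \<epsilon> x"
proof -
  let ?S = "supp x"
  have fS: "finite ?S" by (rule hc_fin)
  have "\<epsilon> x = \<epsilon> (\<Sum>\<gamma>\<in>?S. hc \<gamma> x)" using hc_sumS[OF fS, of x] by simp
  also have "\<dots> = (\<Sum>\<gamma>\<in>?S. \<epsilon> (hc \<gamma> x))" by (rule kl_sum[OF eps_lin])
  also have "\<dots> = (\<Sum>\<gamma>\<in>?S \<inter> GS. \<epsilon> (hc \<gamma> x))"
  proof (rule sum.mono_neutral_right[OF fS])
    show "\<forall>i\<in>?S - ?S \<inter> GS. \<epsilon> (hc i x) = 0"
    proof
      fix i assume "i \<in> ?S - ?S \<inter> GS" then have "i \<noteq> 0" using GS_zero by auto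
      then show "\<epsilon> (hc i x) = 0" by (rule eps_hom[OF _ hc_in])
    qed
  qed auto
  also have "\<dots> = \<epsilon> (\<Sum>\<gamma>\<in>?S \<inter> GS. hc \<gamma> x)" by (rule kl_sum[OF eps_lin, symmetric])
  also have "\<dots> = \<epsilon> (pr x)" using pr_S[OF fS, of x] by simp
  finally show ?thesis by simp
qed

lemma al_ev2: "alin sc f \<Longrightarrow> f (ev2 F zs) = ev2 (\<lambda>x y. f (F x y)) zs"
  by (induct zs) (auto simp: al_zero alin_def)

lemma counit_m:
  assumes a: "a \<in> A_slope sc \<Gamma> Agr \<mu>"
  shows "sum_list (map (\<lambda>(x, y). sc (\<epsilon> x) y) (Dm a)) = a"
    and "sum_list (map (\<lambda>(x, y). sc (\<epsilon> y) x) (Dm a)) = a"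
proof -
  have "sum_list (map (\<lambda>(x, y). sc (\<epsilon> x) y) (Dm a)) = ev2 (\<lambda>x y. sc (\<epsilon> x) y) (Dm a)"
    by (simp add: ev2_def)
  also have "\<dots> = ev2 (\<lambda>x y. sc (\<epsilon> (pr x)) (pr y)) (\<Delta> a)" by (rule ev2_Dm)
  also have "\<dots> = ev2 (\<lambda>x y. pr (sc (\<epsilon> x) y)) (\<Delta> a)" by (simp add: eps_pr pr_sc)
  also have "\<dots> = pr (ev2 (\<lambda>x y. sc (\<epsilon> x) y) (\<Delta> a))" by (rule al_ev2[OF alin_pr, symmetric])
  also have "\<dots> = pr a" using counitL[of a] by (simp add: ev2_def)
  also have "\<dots> = a" by (rule pr_slope[OF a])
  finally show "sum_list (map (\<lambda>(x, y). sc (\<epsilon> x) y) (Dm a)) = a" .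
  have "sum_list (map (\<lambda>(x, y). sc (\<epsilon> y) x) (Dm a)) = ev2 (\<lambda>x y. sc (\<epsilon> y) x) (Dm a)"
    by (simp add: ev2_def)
  also have "\<dots> = ev2 (\<lambda>x y. sc (\<epsilon> (pr y)) (pr x)) (\<Delta> a)" by (rule ev2_Dm)
  also have "\<dots> = ev2 (\<lambda>x y. pr (sc (\<epsilon> y) x)) (\<Delta> a)" by (simp add: eps_pr pr_sc)
  also have "\<dots> = pr (ev2 (\<lambda>x y. sc (\<epsilon> y) x) (\<Delta> a))" by (rule al_ev2[OF alin_pr, symmetric])
  also have "\<dots> = pr a" using counitR[of a] by (simp add: ev2_def)
  also have "\<dots> = a" by (rule pr_slope[OF a])
  finally show "sum_list (map (\<lambda>(x, y). sc (\<epsilon> y) x) (Dm a)) = a" .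
qed

lemma E_hom_out:
  assumes B: "bilinear_form sc B" and w: "w \<in> Agr \<gamma>" and g: "\<gamma> \<notin> GS"
  shows "ev2 (\<lambda>u v. B (pr u) (pr v)) (\<Delta> w) = 0"
proof -
  obtain M where M: "hrep \<gamma> M" "teq2 sc (\<Delta> w) (map snd M)" using hrep_exists[OF w] by blast
  have "ev2 (\<lambda>u v. B (pr u) (pr v)) (\<Delta> w) = ev2 (\<lambda>u v. B (pr u) (pr v)) (map snd M)"
    by (rule teq2_D[OF M(2) bil_comp[OF B alin_pr alin_pr]])
  also have "\<dots> = ev2 B (map snd (filter (\<lambda>e. fst (fst e) \<in> GS \<and> snd (fst e) \<in> GS) M))"
    by (rule ev2_pr_label[OF B M(1)])
  also have "filter (\<lambda>e. fst (fst e) \<in> GS \<and> snd (fst e) \<in> GS) M = []"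
  proof (rule filter_False, rule ballI)
    fix e assume e: "e \<in> set M"
    obtain l1 l2 x y where ee: "e = ((l1, l2), (x, y))" by (metis prod.collapse)
    have "l1 + l2 = \<gamma>" using hrepD[OF M(1)] e ee by blast
    then show "\<not> (fst (fst e) \<in> GS \<and> snd (fst e) \<in> GS)" using ee g GS_add[of l1 l2] by auto
  qed
  finally show ?thesis by simp
qed

lemma CP: assumes B: "bilinear_form sc B"
  shows "ev2 (\<lambda>u v. B (pr u) (pr v)) (\<Delta> (pr x)) = ev2 (\<lambda>u v. B (pr u) (pr v)) (\<Delta> x)"
proof -
  let ?E = "\<lambda>w. ev2 (\<lambda>u v. B (pr u) (pr v)) (\<Delta> w)"
  have E: "klinear sc ?E" by (rule E_lin, rule bil_comp[OF B alin_pr alin_pr])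
  let ?S = "supp x"
  have fS: "finite ?S" by (rule hc_fin)
  have "?E x = ?E (\<Sum>\<gamma>\<in>?S. hc \<gamma> x)" using hc_sumS[OF fS, of x] by simp
  also have "\<dots> = (\<Sum>\<gamma>\<in>?S. ?E (hc \<gamma> x))" by (rule kl_sum[OF E])
  also have "\<dots> = (\<Sum>\<gamma>\<in>?S \<inter> GS. ?E (hc \<gamma> x))"
    by (rule sum.mono_neutral_right[OF fS]) (auto intro!: E_hom_out[OF B] hc_in)
  also have "\<dots> = ?E (\<Sum>\<gamma>\<in>?S \<inter> GS. hc \<gamma> x)" by (rule kl_sum[OF E, symmetric])
  also have "\<dots> = ?E (pr x)" using pr_S[OF fS, of x] by simp
  finally show ?thesis by simp
qed

lemma coassoc_m: "teq3 sc (cop_left Dm (Dm a)) (cop_right Dm (Dm a))"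
  unfolding teq3_ev
proof (intro allI impI)
  fix T assume T: "trilinear_form sc T"
  let ?T = "\<lambda>u v w. T (pr u) (pr v) (pr w)"
  have T': "trilinear_form sc ?T" by (rule tri_comp[OF T alin_pr alin_pr alin_pr])
  have "ev3 T (cop_left Dm (Dm a)) = ev2 (\<lambda>x y. ev2 (\<lambda>u v. T u v y) (Dm x)) (Dm a)"
    by (rule ev3_cop_left)
  also have "\<dots> = ev2 (\<lambda>x y. ev2 (\<lambda>u v. T (pr u) (pr v) (pr y)) (\<Delta> (pr x))) (\<Delta> a)"
    by (simp add: ev2_Dm)
  also have "\<dots> = ev2 (\<lambda>x y. ev2 (\<lambda>u v. ?T u v y) (\<Delta> x)) (\<Delta> a)"
  proof (rule ev2_cong)
    fix x y
    show "ev2 (\<lambda>u v. T (pr u) (pr v) (pr y)) (\<Delta> (pr x)) = ev2 (\<lambda>u v. ?T u v y) (\<Delta> x)"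
      using CP[OF tri_slice1[OF T, of "pr y"], of x] by simp
  qed
  also have "\<dots> = ev2 (\<lambda>x y. ev2 (\<lambda>u v. ?T x u v) (\<Delta> y)) (\<Delta> a)"
    by (rule coassoc_ev[OF T'])
  also have "\<dots> = ev2 (\<lambda>x y. ev2 (\<lambda>u v. T (pr x) (pr u) (pr v)) (\<Delta> (pr y))) (\<Delta> a)"
  proof (rule ev2_cong)
    fix x y
    show "ev2 (\<lambda>u v. ?T x u v) (\<Delta> y) = ev2 (\<lambda>u v. T (pr x) (pr u) (pr v)) (\<Delta> (pr y))"
      using CP[OF tri_slice3[OF T, of "pr x"], of y] by simp
  qed
  also have "\<dots> = ev2 (\<lambda>x y. ev2 (\<lambda>u v. T x u v) (Dm y)) (Dm a)"
    by (simp add: ev2_Dm)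
  also have "\<dots> = ev3 T (cop_right Dm (Dm a))"
    by (rule ev3_cop_right[symmetric])
  finally show "ev3 T (cop_left Dm (Dm a)) = ev3 T (cop_right Dm (Dm a))" .
qed

end


context cgb begin

abbreviation Pb :: "(((real \<times> real) \<times> (real \<times> real)) \<times> ('a \<times> 'a)) \<Rightarrow> bool" where
  "Pb e \<equiv> fst (fst e) \<in> GS \<and> snd (fst e) \<in> GS"

lemma Dm_rep: "hrep \<gamma> L \<Longrightarrow> teq2 sc (\<Delta> a) (map snd L) \<Longrightarrow> teq2 sc (Dm a) (map snd (filter (\<lambda>e. Pb e) L))"
proof (rule teq2I)
  fix B assume L: "hrep \<gamma> L" and t: "teq2 sc (\<Delta> a) (map snd L)" and B: "bilinear_form sc B"
  have "ev2 B (Dm a) = ev2 (\<lambda>x y. B (pr x) (pr y)) (\<Delta> a)" by (rule ev2_Dm)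
  also have "\<dots> = ev2 (\<lambda>x y. B (pr x) (pr y)) (map snd L)"
    by (rule teq2_D[OF t bil_comp[OF B alin_pr alin_pr]])
  also have "\<dots> = ev2 B (map snd (filter (\<lambda>e. Pb e) L))" by (rule ev2_pr_label[OF B L])
  finally show "ev2 B (Dm a) = ev2 B (map snd (filter (\<lambda>e. Pb e) L))" .
qed

lemma lmul_Nil: "lmul [] M = []" and
  lmul_Cons: "lmul (e # L) M = map (\<lambda>f. (fst e + fst f, (fst (snd e) * fst (snd f), snd (snd e) * snd (snd f)))) M @ lmul L M"
  by (simp_all add: lmul_def)

lemma filter_lmul:
  assumes "\<And>e f. e \<in> set L \<Longrightarrow> f \<in> set M \<Longrightarrow> P (fst e + fst f) = (P (fst e) \<and> P (fst f))"
  shows "filter (\<lambda>g. P (fst g)) (lmul L M) = lmul (filter (\<lambda>e. P (fst e)) L) (filter (\<lambda>e. P (fst e)) M)"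
  using assms
proof (induct L)
  case Nil then show ?case by (simp add: lmul_Nil)
next
  case (Cons e L)
  let ?c = "\<lambda>f. (fst e + fst f, (fst (snd e) * fst (snd f), snd (snd e) * snd (snd f)))"
  have h: "\<And>f. f \<in> set M \<Longrightarrow> P (fst e + fst f) = (P (fst e) \<and> P (fst f))" using Cons.prems by simp
  have "filter (\<lambda>g. P (fst g)) (map ?c M) = (if P (fst e) then map ?c (filter (\<lambda>f. P (fst f)) M) else [])"
    using h by (induct M) auto
  moreover have "filter (\<lambda>g. P (fst g)) (lmul L M) = lmul (filter (\<lambda>e. P (fst e)) L) (filter (\<lambda>e. P (fst e)) M)"
    using Cons by simp
  ultimately show ?case by (simp add: lmul_Cons)
qed

lemma Pb_mult:
  assumes L: "goodrep \<gamma>1 x L" and M: "goodrep \<gamma>2 y M" and g: "\<gamma>1 \<in> GS" "\<gamma>2 \<in> GS"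
    and e: "e \<in> set L" and f: "f \<in> set M"
  shows "(fst (fst e + fst f) \<in> GS \<and> snd (fst e + fst f) \<in> GS) = (Pb e \<and> Pb f)"
proof -
  obtain a1 a2 x1 y1 where ee: "e = ((a1, a2), (x1, y1))" by (metis prod.collapse)
  obtain b1 b2 x2 y2 where ff: "f = ((b1, b2), (x2, y2))" by (metis prod.collapse)
  have eL: "((a1, a2), (x1, y1)) \<in> set L" using e ee by simp
  have fM: "((b1, b2), (x2, y2)) \<in> set M" using f ff by simp
  have hL: "hrep \<gamma>1 L" "\<forall>e\<in>set L. fst (fst e) \<in> GL" using L unfolding goodrep_def by blast+
  have hM: "hrep \<gamma>2 M" "\<forall>e\<in>set M. fst (fst e) \<in> GL" using M unfolding goodrep_def by blast+
  have he: "a1 + a2 = \<gamma>1" "a2 \<in> \<Gamma>" "a1 \<in> GL"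
    using hrepD[OF hL(1) eL] hL(2) eL by auto
  have hf: "b1 + b2 = \<gamma>2" "b2 \<in> \<Gamma>" "b1 \<in> GL"
    using hrepD[OF hM(1) fM] hM(2) fM by auto
  show ?thesis
  proof
    assume "fst (fst e + fst f) \<in> GS \<and> snd (fst e + fst f) \<in> GS"
    then have s: "a1 + b1 \<in> GS" using ee ff by simp
    have "a1 \<in> GS" "b1 \<in> GS" using GL_split[OF he(3) hf(3) s] by auto
    moreover have "a2 \<in> GS" using GS_sub[of a1 a2] he g \<open>a1 \<in> GS\<close> by simp
    moreover have "b2 \<in> GS" using GS_sub[of b1 b2] hf g \<open>b1 \<in> GS\<close> by simp
    ultimately show "Pb e \<and> Pb f" using ee ff by simp
  next
    assume "Pb e \<and> Pb f"
    then show "fst (fst e + fst f) \<in> GS \<and> snd (fst e + fst f) \<in> GS" using ee ff GS_add by simp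
  qed
qed

lemma Dm_mult_ss:
  assumes x: "semistable sc \<Gamma> Agr \<Delta> \<mu> x" and y: "semistable sc \<Gamma> Agr \<Delta> \<mu> y"
  shows "teq2 sc (Dm (x * y)) (tmult (Dm x) (Dm y))"
proof -
  obtain \<gamma>1 where g1: "\<gamma>1 \<in> GS" "x \<in> Agr \<gamma>1" using ss_homD[OF x] by blast
  obtain \<gamma>2 where g2: "\<gamma>2 \<in> GS" "y \<in> Agr \<gamma>2" using ss_homD[OF y] by blast
  obtain L where L: "goodrep \<gamma>1 x L" using ss_rep[OF x g1(2)] by blast
  obtain M where M: "goodrep \<gamma>2 y M" using ss_rep[OF y g2(2)] by blast
  have LM: "goodrep (\<gamma>1 + \<gamma>2) (x * y) (lmul L M)" by (rule goodrep_mult[OF L M])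
  have t1: "teq2 sc (Dm (x * y)) (map snd (filter (\<lambda>e. Pb e) (lmul L M)))"
    using LM unfolding goodrep_def by (intro Dm_rep) auto
  have "filter (\<lambda>e. Pb e) (lmul L M) = lmul (filter (\<lambda>e. Pb e) L) (filter (\<lambda>e. Pb e) M)"
    by (rule filter_lmul[where P="\<lambda>l. fst l \<in> GS \<and> snd l \<in> GS"]) (rule Pb_mult[OF L M g1(1) g2(1)])
  then have t2: "map snd (filter (\<lambda>e. Pb e) (lmul L M)) = tmult (map snd (filter (\<lambda>e. Pb e) L)) (map snd (filter (\<lambda>e. Pb e) M))"
    by (simp add: lmul_snd)
  have t3: "teq2 sc (tmult (Dm x) (Dm y)) (tmult (map snd (filter (\<lambda>e. Pb e) L)) (map snd (filter (\<lambda>e. Pb e) M)))"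
    using L M unfolding goodrep_def by (intro tmult_teq Dm_rep) auto
  show ?thesis using teq2_trans[OF t1[unfolded t2] teq2_sym[OF t3]] .
qed

lemma kl_comp: "klinear sc f \<Longrightarrow> alin sc g \<Longrightarrow> klinear sc (\<lambda>x. f (g x))"
  by (simp add: klinear_def alin_def)

lemma kl_span_eq:
  assumes f: "klinear sc f" and g: "klinear sc g" and S: "\<And>s. s \<in> S \<Longrightarrow> f s = g s" and x: "x \<in> vs.span S"
  shows "f x = g x"
  using x
proof (induct rule: vs.span_induct_alt)
  case base then show ?case by (simp add: kl_zero[OF f] kl_zero[OF g])
next
  case (step c s y) then show ?case by (simp add: kl_add[OF f] kl_add[OF g] kl_sc[OF f] kl_sc[OF g] S)
qed

lemma Dm_mult: assumes x: "x \<in> V" and y: "y \<in> V" shows "teq2 sc (Dm (x * y)) (tmult (Dm x) (Dm y))"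
proof (rule teq2I)
  fix B assume B: "bilinear_form sc B"
  have F1: "klinear sc (\<lambda>y. ev2 B (Dm (x * y)))" for x by (rule kl_comp[OF Em_lin[OF B] alin_multL])
  have F2: "klinear sc (\<lambda>x. ev2 B (Dm (x * y)))" for y by (rule kl_comp[OF Em_lin[OF B] alin_multR])
  have G1: "klinear sc (\<lambda>y. ev2 B (tmult (Dm x) (Dm y)))" for x
  proof -
    have "(\<lambda>y. ev2 B (tmult (Dm x) (Dm y))) = (\<lambda>y. ev2 (\<lambda>u v. ev2 (\<lambda>a b. B (a * u) (b * v)) (Dm x)) (Dm y))"
      by (rule ext) (simp only: ev2_tmult, rule ev2_swap)
    then show ?thesis using Em_lin[OF tm_bil2[OF B]] by simp
  qed
  have G2: "klinear sc (\<lambda>x. ev2 B (tmult (Dm x) (Dm y)))" for y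
  proof -
    have "(\<lambda>x. ev2 B (tmult (Dm x) (Dm y))) = (\<lambda>x. ev2 (\<lambda>a b. ev2 (\<lambda>u v. B (a * u) (b * v)) (Dm y)) (Dm x))"
      by (simp add: ev2_tmult)
    then show ?thesis using Em_lin[OF tm_bil1[OF B]] by simp
  qed
  have ss: "ev2 B (Dm (s * t)) = ev2 B (tmult (Dm s) (Dm t))" if "s \<in> SSet" "t \<in> SSet" for s t
    using teq2_D[OF Dm_mult_ss B] that by simp
  have step1: "ev2 B (Dm (s * y)) = ev2 B (tmult (Dm s) (Dm y))" if "s \<in> SSet" for s
    by (rule kl_span_eq[OF F1 G1 _ y[unfolded A_ss_def]]) (use ss that in blast)
  show "ev2 B (Dm (x * y)) = ev2 B (tmult (Dm x) (Dm y))"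
    by (rule kl_span_eq[OF F2 G2 step1 x[unfolded A_ss_def]])
qed

end


context cgb begin

lemma vs_sc: "vector_space sc"
  using kalgebra by (simp add: kalgebra_def)

lemma kvs: "vector_space ((*) :: 'k \<Rightarrow> 'k \<Rightarrow> 'k)"
  by unfold_locales (simp_all add: algebra_simps)

lemma dual_exists:
  assumes "vs.independent B0"
  shows "\<exists>g. klinear sc g \<and> (\<forall>x\<in>B0. g x = (if x = b then 1 else 0))"
proof -
  interpret vp: vector_space_pair sc "(*) :: 'k \<Rightarrow> 'k \<Rightarrow> 'k"
    unfolding vector_space_pair_def using vs_sc kvs by blast
  obtain g where g: "Vector_Spaces.linear sc (*) g" "\<forall>x\<in>B0. g x = (if x = b then 1 else 0)"
    using vp.linear_independent_extend[OF assms, of "\<lambda>x. if x = b then 1 else 0"] by blast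
  have "klinear sc g" using g(1) by (simp add: Vector_Spaces.linear_iff klinear_def)
  then show ?thesis using g(2) by blast
qed

lemma span_coord:
  assumes fin: "finite B0"
    and \<phi>: "\<And>b. b \<in> B0 \<Longrightarrow> klinear sc (\<phi> b)" "\<And>b x. b \<in> B0 \<Longrightarrow> x \<in> B0 \<Longrightarrow> \<phi> b x = (if x = b then 1 else 0)"
    and y: "y \<in> vs.span B0"
  shows "(\<Sum>b\<in>B0. sc (\<phi> b y) b) = y"
proof -
  obtain u where u: "y = (\<Sum>v\<in>B0. sc (u v) v)" using y vs.span_finite[OF fin] by auto
  have c: "\<phi> b y = u b" if b: "b \<in> B0" for b
  proof -
    have "\<phi> b y = (\<Sum>v\<in>B0. \<phi> b (sc (u v) v))" unfolding u by (rule kl_sum[OF \<phi>(1)[OF b]])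
    also have "\<dots> = (\<Sum>v\<in>B0. if v = b then u v else 0)"
      by (rule sum.cong) (auto simp: kl_sc[OF \<phi>(1)[OF b]] \<phi>(2)[OF b])
    also have "\<dots> = u b" using b fin by (simp add: sum.delta)
    finally show ?thesis .
  qed
  have "(\<Sum>b\<in>B0. sc (\<phi> b y) b) = (\<Sum>b\<in>B0. sc (u b) b)" by (rule sum.cong) (auto simp: c)
  then show ?thesis using u by simp
qed

lemma ev2_span: "set (map fst zs) \<subseteq> S \<Longrightarrow> ev2 (\<lambda>x y. sc (f x y) x) zs \<in> vs.span S"
  by (induct zs) (auto intro!: vs.span_add vs.span_scale vs.span_zero intro: vs.span_base)

lemma ev2_mapb: "ev2 B (map (\<lambda>b. (f b, b)) bs) = (\<Sum>b\<leftarrow>bs. B (f b) b)"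
  by (induct bs) auto

lemma ev2_mapb2: "ev2 B (map (\<lambda>b. (b, f b)) bs) = (\<Sum>b\<leftarrow>bs. B b (f b))"
  by (induct bs) auto

lemma kl_ev2: "klinear sc f \<Longrightarrow> f (ev2 F zs) = ev2 (\<lambda>x y. f (F x y)) zs"
  by (induct zs) (auto simp: kl_zero kl_add)

lemma rep_indep:
  "\<exists>bs X \<phi>. distinct bs \<and> set bs \<subseteq> snd ` set zs \<and> (\<forall>b\<in>set bs. X b \<in> vs.span (fst ` set zs)) \<and>
     (\<forall>b\<in>set bs. klinear sc (\<phi> b)) \<and> (\<forall>b\<in>set bs. \<forall>b'\<in>set bs. \<phi> b b' = (if b' = b then 1 else 0)) \<and>
     teq2 sc zs (map (\<lambda>b. (X b, b)) bs)"
proof -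
  obtain B0 where B0: "B0 \<subseteq> snd ` set zs" "vs.independent B0" "snd ` set zs \<subseteq> vs.span B0"
    by (rule vs.maximal_independent_subset)
  have fin: "finite B0" using B0(1) finite_subset by blast
  have "\<forall>b\<in>B0. \<exists>g. klinear sc g \<and> (\<forall>x\<in>B0. g x = (if x = b then 1 else 0))"
    using dual_exists[OF B0(2)] by blast
  then obtain \<phi> where \<phi>: "\<forall>b\<in>B0. klinear sc (\<phi> b) \<and> (\<forall>x\<in>B0. \<phi> b x = (if x = b then 1 else 0))"
    by (rule bchoice[THEN exE]) blast
  have \<phi>1: "\<And>b. b \<in> B0 \<Longrightarrow> klinear sc (\<phi> b)" and \<phi>2: "\<And>b x. b \<in> B0 \<Longrightarrow> x \<in> B0 \<Longrightarrow> \<phi> b x = (if x = b then 1 else 0)"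
    using \<phi> by auto
  obtain bs where bs: "set bs = B0" "distinct bs" using finite_distinct_list[OF fin] by blast
  define X where "X b = ev2 (\<lambda>x y. sc (\<phi> b y) x) zs" for b
  have Xspan: "X b \<in> vs.span (fst ` set zs)" for b
    unfolding X_def by (rule ev2_span) auto
  have "teq2 sc zs (map (\<lambda>b. (X b, b)) bs)"
  proof (rule teq2I)
    fix B assume B: "bilinear_form sc B"
    have kB1: "klinear sc (\<lambda>x. B x y)" for y using B by (simp add: bilinear_form_def)
    have kB2: "klinear sc (\<lambda>y. B x y)" for x using B by (simp add: bilinear_form_def)
    have "ev2 B (map (\<lambda>b. (X b, b)) bs) = (\<Sum>b\<leftarrow>bs. B (X b) b)" by (rule ev2_mapb)
    also have "\<dots> = (\<Sum>b\<in>B0. B (X b) b)" using bs by (simp add: sum_list_distinct_conv_sum_set)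
    also have "\<dots> = (\<Sum>b\<in>B0. ev2 (\<lambda>x y. \<phi> b y * B x b) zs)"
    proof (rule sum.cong)
      fix b show "B (X b) b = ev2 (\<lambda>x y. \<phi> b y * B x b) zs"
        unfolding X_def using kl_ev2[OF kB1[of b], of "\<lambda>x y. sc (\<phi> b y) x" zs]
        by (simp add: bil_sc1[OF B])
    qed simp
    also have "\<dots> = ev2 (\<lambda>x y. \<Sum>b\<in>B0. \<phi> b y * B x b) zs" by (rule ev2_sum[symmetric])
    also have "\<dots> = ev2 B zs"
    proof (rule ev2_cong)
      fix x y assume xy: "(x, y) \<in> set zs"
      have yB: "y \<in> vs.span B0" using xy B0(3) by force
      have "(\<Sum>b\<in>B0. \<phi> b y * B x b) = B x (\<Sum>b\<in>B0. sc (\<phi> b y) b)"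
        by (simp add: kl_sum[OF kB2] bil_sc2[OF B])
      also have "\<dots> = B x y" using span_coord[OF fin \<phi>1 \<phi>2 yB] by simp
      finally show "(\<Sum>b\<in>B0. \<phi> b y * B x b) = B x y" .
    qed
    finally show "ev2 B zs = ev2 B (map (\<lambda>b. (X b, b)) bs)" by simp
  qed
  moreover have "\<forall>b\<in>set bs. \<forall>b'\<in>set bs. \<phi> b b' = (if b' = b then 1 else 0)" using \<phi>2 bs by auto
  moreover have "\<forall>b\<in>set bs. klinear sc (\<phi> b)" using \<phi>1 bs by auto
  ultimately show ?thesis using bs B0(1) Xspan by blast
qed

definition swp :: "('a \<times> 'a) list \<Rightarrow> ('a \<times> 'a) list" where "swp zs = map (\<lambda>(x, y). (y, x)) zs"

lemma ev2_swp: "ev2 B (swp zs) = ev2 (\<lambda>x y. B y x) zs"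
  by (induct zs) (auto simp: swp_def)

lemma teq2_swp: "teq2 sc xs ys \<Longrightarrow> teq2 sc (swp xs) (swp ys)"
  unfolding teq2_ev ev2_swp by (auto simp: bilinear_form_def)

lemma swp_swp: "swp (swp zs) = zs"
  by (induct zs) (auto simp: swp_def)

lemma rep_indep_left:
  "\<exists>es Y \<psi>. distinct es \<and> set es \<subseteq> fst ` set zs \<and> (\<forall>e\<in>set es. Y e \<in> vs.span (snd ` set zs)) \<and>
     (\<forall>e\<in>set es. klinear sc (\<psi> e)) \<and> (\<forall>e\<in>set es. \<forall>e'\<in>set es. \<psi> e e' = (if e' = e then 1 else 0)) \<and>
     teq2 sc zs (map (\<lambda>e. (e, Y e)) es)"
proof -
  obtain bs X \<phi> where h: "distinct bs" "set bs \<subseteq> snd ` set (swp zs)" "\<forall>b\<in>set bs. X b \<in> vs.span (fst ` set (swp zs))"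
    "\<forall>b\<in>set bs. klinear sc (\<phi> b)" "\<forall>b\<in>set bs. \<forall>b'\<in>set bs. \<phi> b b' = (if b' = b then 1 else 0)"
    "teq2 sc (swp zs) (map (\<lambda>b. (X b, b)) bs)"
    using rep_indep[of "swp zs"] by blast
  have s1: "snd ` set (swp zs) = fst ` set zs" by (force simp: swp_def)
  have s2: "fst ` set (swp zs) = snd ` set zs" by (force simp: swp_def)
  have "swp (map (\<lambda>b. (X b, b)) bs) = map (\<lambda>b. (b, X b)) bs" by (simp add: swp_def)
  then have "teq2 sc zs (map (\<lambda>b. (b, X b)) bs)" using teq2_swp[OF h(6)] by (simp add: swp_swp)
  then show ?thesis using h s1 s2 by (intro exI[of _ bs] exI[of _ X] exI[of _ \<phi>]) auto
qed

lemma in_snd_L: "(x, y) \<in> set (map snd L) \<Longrightarrow> \<exists>l1 l2. ((l1, l2), (x, y)) \<in> set L"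
  by force

end


context cgb begin

lemma goodrepD: "goodrep \<gamma>0 a L \<Longrightarrow> hrep \<gamma>0 L"
  "goodrep \<gamma>0 a L \<Longrightarrow> \<forall>e\<in>set L. fst (fst e) \<in> GL"
  "goodrep \<gamma>0 a L \<Longrightarrow> teq2 sc (\<Delta> a) (map snd L)"
  by (simp_all add: goodrep_def)

lemma sum_delta_list:
  assumes "distinct bs" "b \<in> set bs" "\<And>b'. b' \<in> set bs \<Longrightarrow> d b' = (if b' = b then 1 else 0)"
  shows "(\<Sum>b'\<leftarrow>bs. F b' * (d b' :: 'k)) = F b"
proof -
  have "(\<Sum>b'\<leftarrow>bs. F b' * d b') = (\<Sum>b'\<in>set bs. F b' * d b')"
    using assms(1) by (simp add: sum_list_distinct_conv_sum_set)
  also have "\<dots> = (\<Sum>b'\<in>set bs. if b' = b then F b' else 0)"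
    by (rule sum.cong) (auto simp: assms(3))
  also have "\<dots> = F b" using assms(2) by (simp add: sum.delta)
  finally show ?thesis .
qed

lemma X_arg:
  assumes L: "goodrep \<gamma>0 a L" and bb: "\<beta> + \<beta>' = \<gamma>0"
    and t: "teq2 sc (map snd (filter (\<lambda>e. fst e = (\<beta>, \<beta>')) L)) (map (\<lambda>b. (X b, b)) bs)"
    and bs: "distinct bs" "\<forall>b\<in>set bs. klinear sc (\<phi> b)" "\<forall>b\<in>set bs. \<forall>b'\<in>set bs. \<phi> b b' = (if b' = b then 1 else 0)"
    and b: "b \<in> set bs" and \<beta>1: "\<beta>1 \<notin> GL" and B: "bilinear_form sc B"
  shows "ev2 (\<lambda>u v. B (hc \<beta>1 u) (hc \<beta>2 v)) (\<Delta> (X b)) = 0"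
proof -
  note hL = goodrepD[OF L]
  define B1 where "B1 = (\<lambda>u v. B (hc \<beta>1 u) (hc \<beta>2 v))"
  have B1: "bilinear_form sc B1" unfolding B1_def by (rule bil_comp[OF B alin_hc alin_hc])
  have phi: "klinear sc (\<phi> b)" using bs(2) b by blast
  define T where "T = (\<lambda>u v w. B1 u v * \<phi> b w)"
  have T: "trilinear_form sc T" unfolding T_def by (rule tri_mk1[OF B1 phi])
  define T' where "T' = (\<lambda>u v w. T u v (hc \<beta>' w))"
  have T': "trilinear_form sc T'" unfolding T'_def by (rule tri_comp[OF T alin_id alin_id alin_hc])
  define H where "H = (\<lambda>x y. ev2 (\<lambda>u v. T u v y) (\<Delta> x))"
  have H: "bilinear_form sc H" unfolding H_def by (rule H_bil[OF T])
  have "ev2 H (map (\<lambda>b. (X b, b)) bs) = (\<Sum>b'\<leftarrow>bs. ev2 B1 (\<Delta> (X b')) * \<phi> b b')"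
    by (simp add: ev2_mapb H_def T_def ev2_multc)
  also have "\<dots> = ev2 B1 (\<Delta> (X b))" by (rule sum_delta_list[OF bs(1) b]) (use bs(3) b in auto)
  finally have e1: "ev2 H (map (\<lambda>b. (X b, b)) bs) = ev2 B1 (\<Delta> (X b))" .
  have e2: "ev2 H (map snd (filter (\<lambda>e. fst e = (\<beta>, \<beta>')) L)) = ev2 H (map (\<lambda>b. (X b, b)) bs)"
    by (rule teq2_D[OF t H])
  have e3: "ev2 (\<lambda>x y. ev2 (\<lambda>u v. T' u v y) (\<Delta> x)) (map snd L) = ev2 H (map snd (filter (\<lambda>e. fst e = (\<beta>, \<beta>')) L))"
  proof (rule ev2_filter_label)
    fix l x y assume e: "(l, (x, y)) \<in> set L"
    obtain m1 m2 where l: "l = (m1, m2)" by (cases l)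
    have h: "m1 + m2 = \<gamma>0" "y \<in> Agr m2" using hrepD[OF hL(1) e[unfolded l]] by auto
    show "ev2 (\<lambda>u v. T' u v y) (\<Delta> x) = (if l = (\<beta>, \<beta>') then H x y else 0)"
    proof (cases "l = (\<beta>, \<beta>')")
      case True then show ?thesis using h l by (simp add: T'_def H_def hc_hom)
    next
      case False
      then have "m2 \<noteq> \<beta>'" using h(1) bb l by auto
      then have "hc \<beta>' y = 0" using hc_hom[OF h(2)] by simp
      then show ?thesis using False by (simp add: T'_def T_def kl_zero[OF phi] ev2_zero)
    qed
  qed
  have e4: "ev2 (\<lambda>x y. ev2 (\<lambda>u v. T' u v y) (\<Delta> x)) (map snd L) = ev2 (\<lambda>x y. ev2 (\<lambda>u v. T' x u v) (\<Delta> y)) (map snd L)"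
    by (rule coassoc_rep[OF T' hL(3)])
  have e5: "ev2 (\<lambda>x y. ev2 (\<lambda>u v. T' x u v) (\<Delta> y)) (map snd L) = 0"
  proof (rule ev2_zero)
    fix x y assume "(x, y) \<in> set (map snd L)"
    from in_snd_L[OF this] obtain m1 m2 where e: "((m1, m2), (x, y)) \<in> set L" by blast
    have "x \<in> Agr m1" using hrepD[OF hL(1) e] by auto
    moreover have "m1 \<in> GL" using hL(2) e by force
    ultimately have "hc \<beta>1 x = 0" using \<beta>1 hc_hom by auto
    then show "ev2 (\<lambda>u v. T' x u v) (\<Delta> y) = 0"
      by (simp add: T'_def T_def B1_def bil_zero1[OF B] ev2_zero)
  qed
  show ?thesis using e1 e2 e3 e4 e5 unfolding B1_def by simp
qed

lemma Y_arg:
  assumes L: "goodrep \<gamma>0 a L" and bb: "\<beta> + \<beta>' = \<gamma>0" and bGS: "\<beta> \<in> GS"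
    and t: "teq2 sc (map snd (filter (\<lambda>e. fst e = (\<beta>, \<beta>')) L)) (map (\<lambda>e. (e, Y e)) es)"
    and es: "distinct es" "\<forall>e\<in>set es. klinear sc (\<psi> e)" "\<forall>e\<in>set es. \<forall>e'\<in>set es. \<psi> e e' = (if e' = e then 1 else 0)"
    and e: "e \<in> set es" and \<beta>2: "\<beta>2 \<notin> GL" and B: "bilinear_form sc B"
  shows "ev2 (\<lambda>u v. B (hc \<beta>2 u) (hc \<beta>3 v)) (\<Delta> (Y e)) = 0"
proof -
  note hL = goodrepD[OF L]
  define B1 where "B1 = (\<lambda>u v. B (hc \<beta>2 u) (hc \<beta>3 v))"
  have B1: "bilinear_form sc B1" unfolding B1_def by (rule bil_comp[OF B alin_hc alin_hc])
  have psi: "klinear sc (\<psi> e)" using es(2) e by blast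
  define T where "T = (\<lambda>u v w. \<psi> e u * B1 v w)"
  have T: "trilinear_form sc T" unfolding T_def by (rule tri_mk2[OF B1 psi])
  define T' where "T' = (\<lambda>u v w. T (hc \<beta> u) v w)"
  have T': "trilinear_form sc T'" unfolding T'_def by (rule tri_comp[OF T alin_hc alin_id alin_id])
  define K where "K = (\<lambda>x y. ev2 (\<lambda>u v. T x u v) (\<Delta> y))"
  have K: "bilinear_form sc K" unfolding K_def by (rule K_bil[OF T])
  have "ev2 K (map (\<lambda>e. (e, Y e)) es) = (\<Sum>e'\<leftarrow>es. \<psi> e e' * ev2 B1 (\<Delta> (Y e')))"
    by (simp add: ev2_mapb2 K_def T_def ev2_cmult)
  also have "\<dots> = (\<Sum>e'\<leftarrow>es. ev2 B1 (\<Delta> (Y e')) * \<psi> e e')"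
    by (simp add: mult.commute)
  also have "\<dots> = ev2 B1 (\<Delta> (Y e))" by (rule sum_delta_list[OF es(1) e]) (use es(3) e in auto)
  finally have e1: "ev2 K (map (\<lambda>e. (e, Y e)) es) = ev2 B1 (\<Delta> (Y e))" .
  have e2: "ev2 K (map snd (filter (\<lambda>e. fst e = (\<beta>, \<beta>')) L)) = ev2 K (map (\<lambda>e. (e, Y e)) es)"
    by (rule teq2_D[OF t K])
  have e3: "ev2 (\<lambda>x y. ev2 (\<lambda>u v. T' x u v) (\<Delta> y)) (map snd L) = ev2 K (map snd (filter (\<lambda>e. fst e = (\<beta>, \<beta>')) L))"
  proof (rule ev2_filter_label)
    fix l x y assume el: "(l, (x, y)) \<in> set L"
    obtain m1 m2 where l: "l = (m1, m2)" by (cases l)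
    have h: "m1 + m2 = \<gamma>0" "x \<in> Agr m1" using hrepD[OF hL(1) el[unfolded l]] by auto
    show "ev2 (\<lambda>u v. T' x u v) (\<Delta> y) = (if l = (\<beta>, \<beta>') then K x y else 0)"
    proof (cases "l = (\<beta>, \<beta>')")
      case True then show ?thesis using h l by (simp add: T'_def K_def hc_hom)
    next
      case False
      then have "m1 \<noteq> \<beta>" using h(1) bb l by auto
      then have "hc \<beta> x = 0" using hc_hom[OF h(2)] by simp
      then show ?thesis using False by (simp add: T'_def T_def kl_zero[OF psi] ev2_zero)
    qed
  qed
  have e4: "ev2 (\<lambda>x y. ev2 (\<lambda>u v. T' u v y) (\<Delta> x)) (map snd L) = ev2 (\<lambda>x y. ev2 (\<lambda>u v. T' x u v) (\<Delta> y)) (map snd L)"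
    by (rule coassoc_rep[OF T' hL(3)])
  have e5: "ev2 (\<lambda>x y. ev2 (\<lambda>u v. T' u v y) (\<Delta> x)) (map snd L) = 0"
  proof (rule ev2_zero)
    fix x y assume "(x, y) \<in> set (map snd L)"
    from in_snd_L[OF this] obtain m1 m2 where el: "((m1, m2), (x, y)) \<in> set L" by blast
    have xm: "x \<in> Agr m1" using hrepD[OF hL(1) el] by auto
    have m1: "m1 \<in> GL" using hL(2) el by force
    have C: "bilinear_form sc (\<lambda>u v. T' u v y)" by (rule tri_slice1[OF T'])
    obtain M where M: "hrep m1 M" "teq2 sc (\<Delta> x) (map snd M)" using hrep_exists[OF xm] by blast
    have "ev2 (\<lambda>u v. T' u v y) (\<Delta> x) = ev2 (\<lambda>u v. T' u v y) (map snd M)" by (rule teq2_D[OF M(2) C])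
    also have "\<dots> = 0"
    proof (rule ev2_zero)
      fix u v assume "(u, v) \<in> set (map snd M)"
      from in_snd_L[OF this] obtain n1 n2 where en: "((n1, n2), (u, v)) \<in> set M" by blast
      have hn: "n1 + n2 = m1" "u \<in> Agr n1" "v \<in> Agr n2" "n2 \<in> \<Gamma>" using hrepD[OF M(1) en] by auto
      show "T' u v y = 0"
      proof (cases "n1 = \<beta>")
        case False
        then have "hc \<beta> u = 0" using hc_hom[OF hn(2)] by simp
        then show ?thesis by (simp add: T'_def T_def kl_zero[OF psi])
      next
        case True
        have "n2 \<noteq> \<beta>2"
        proof
          assume "n2 = \<beta>2"
          then have "m1 = \<beta> + \<beta>2" using hn(1) True by simp
          then show False using GL_bad[OF bGS _ \<beta>2] hn(4) \<open>n2 = \<beta>2\<close> m1 by simp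
        qed
        then have "hc \<beta>2 v = 0" using hc_hom[OF hn(3)] by simp
        then show ?thesis by (simp add: T'_def T_def B1_def bil_zero1[OF B])
      qed
    qed
    finally show "ev2 (\<lambda>u v. T' u v y) (\<Delta> x) = 0" .
  qed
  show ?thesis using e1 e2 e3 e4 e5 unfolding B1_def by simp
qed

end


context cgb begin

lemma piece:
  assumes a: "\<gamma>0 \<in> GS" and L: "goodrep \<gamma>0 a L" and l: "((\<beta>, \<beta>'), p) \<in> set L" and bGS: "\<beta> \<in> GS"
  shows "\<exists>zs. set zs \<subseteq> V \<times> V \<and> teq2 sc (map snd (filter (\<lambda>e. fst e = (\<beta>, \<beta>')) L)) zs"
proof -
  note hL = goodrepD[OF L]
  obtain x0 y0 where p: "p = (x0, y0)" by (cases p)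
  have bb: "\<beta> + \<beta>' = \<gamma>0" "\<beta>' \<in> \<Gamma>" using hrepD[OF hL(1) l[unfolded p]] by auto
  have b'GS: "\<beta>' \<in> GS" using GS_sub[of \<beta> \<beta>'] bb a bGS by simp
  define t where "t = map snd (filter (\<lambda>e. fst e = (\<beta>, \<beta>')) L)"
  have tmem: "x \<in> Agr \<beta> \<and> y \<in> Agr \<beta>'" if xy: "(x, y) \<in> set t" for x y
  proof -
    from xy have "((\<beta>, \<beta>'), (x, y)) \<in> set L" unfolding t_def by force
    from hrepD[OF hL(1) this] show ?thesis by auto
  qed
  have tx: "fst ` set t \<subseteq> Agr \<beta>" using tmem by force
  have ty: "snd ` set t \<subseteq> Agr \<beta>'" using tmem by force
  obtain bs X \<phi> where P1: "distinct bs" "set bs \<subseteq> snd ` set t" "\<forall>b\<in>set bs. X b \<in> vs.span (fst ` set t)"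
    "\<forall>b\<in>set bs. klinear sc (\<phi> b)" "\<forall>b\<in>set bs. \<forall>b'\<in>set bs. \<phi> b b' = (if b' = b then 1 else 0)"
    "teq2 sc t (map (\<lambda>b. (X b, b)) bs)"
    using rep_indep[of t] by blast
  have Xss: "semistable sc \<Gamma> Agr \<Delta> \<mu> (X b)" if b: "b \<in> set bs" for b
  proof (rule ssI)
    show "X b \<in> Agr \<beta>" using P1(3) b Agr_span[OF tx] by blast
    show "\<beta> \<in> GS" by (rule bGS)
    fix \<beta>1 \<beta>2 and B :: "'a \<Rightarrow> 'a \<Rightarrow> 'k" assume "\<beta>1 \<notin> GL" "bilinear_form sc B"
    then show "ev2 (\<lambda>x y. B (hc \<beta>1 x) (hc \<beta>2 y)) (\<Delta> (X b)) = 0"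
      by (intro X_arg[OF L bb(1) P1(6)[unfolded t_def] P1(1) P1(4) P1(5) b])
  qed
  define zs1 where "zs1 = map (\<lambda>b. (X b, b)) bs"
  obtain es Y \<psi> where P2: "distinct es" "set es \<subseteq> fst ` set zs1" "\<forall>e\<in>set es. Y e \<in> vs.span (snd ` set zs1)"
    "\<forall>e\<in>set es. klinear sc (\<psi> e)" "\<forall>e\<in>set es. \<forall>e'\<in>set es. \<psi> e e' = (if e' = e then 1 else 0)"
    "teq2 sc zs1 (map (\<lambda>e. (e, Y e)) es)"
    using rep_indep_left[of zs1] by blast
  have t2: "teq2 sc t (map (\<lambda>e. (e, Y e)) es)"
    using teq2_trans[OF P1(6)[folded zs1_def] P2(6)] .
  have "snd ` set zs1 = set bs" by (force simp: zs1_def)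
  then have snd1: "snd ` set zs1 \<subseteq> Agr \<beta>'" using P1(2) ty by blast
  have Yss: "semistable sc \<Gamma> Agr \<Delta> \<mu> (Y e)" if e: "e \<in> set es" for e
  proof (rule ssI)
    show "Y e \<in> Agr \<beta>'" using P2(3) e Agr_span[OF snd1] by blast
    show "\<beta>' \<in> GS" by (rule b'GS)
    fix \<beta>2 \<beta>3 and B :: "'a \<Rightarrow> 'a \<Rightarrow> 'k" assume "\<beta>2 \<notin> GL" "bilinear_form sc B"
    then show "ev2 (\<lambda>x y. B (hc \<beta>2 x) (hc \<beta>3 y)) (\<Delta> (Y e)) = 0"
      by (intro Y_arg[OF L bb(1) bGS t2[unfolded t_def] P2(1) P2(4) P2(5) e])
  qed
  have Ess: "semistable sc \<Gamma> Agr \<Delta> \<mu> e" if "e \<in> set es" for e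
    using P2(2) that Xss by (auto simp: zs1_def)
  have "set (map (\<lambda>e. (e, Y e)) es) \<subseteq> V \<times> V" using Ess Yss SSet_V by auto
  then show ?thesis using t2 unfolding t_def by blast
qed

lemma deep:
  assumes ss: "semistable sc \<Gamma> Agr \<Delta> \<mu> a"
  shows "\<exists>zs. set zs \<subseteq> V \<times> V \<and> teq2 sc (Dm a) zs"
proof -
  obtain \<gamma>0 where g: "\<gamma>0 \<in> GS" "a \<in> Agr \<gamma>0" using ss_homD[OF ss] by blast
  obtain L where L: "goodrep \<gamma>0 a L" using ss_rep[OF ss g(2)] by blast
  note hL = goodrepD[OF L]
  define fL where "fL = filter (\<lambda>e. Pb e) L"
  have t0: "teq2 sc (Dm a) (map snd fL)" unfolding fL_def by (rule Dm_rep[OF hL(1) hL(3)])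
  define LS where "LS = set (map fst fL)"
  have "\<forall>l\<in>LS. \<exists>zs. set zs \<subseteq> V \<times> V \<and> teq2 sc (map snd (filter (\<lambda>e. fst e = l) L)) zs"
  proof
    fix l assume "l \<in> LS"
    then obtain e where e: "e \<in> set L" "Pb e" "fst e = l" by (auto simp: LS_def fL_def)
    obtain \<beta> \<beta>' p where ep: "e = ((\<beta>, \<beta>'), p)" by (metis prod.collapse)
    have "((\<beta>, \<beta>'), p) \<in> set L" "\<beta> \<in> GS" using e ep by auto
    from piece[OF g(1) L this] show "\<exists>zs. set zs \<subseteq> V \<times> V \<and> teq2 sc (map snd (filter (\<lambda>e. fst e = l) L)) zs"
      using e ep by simp
  qed
  then obtain F where F: "\<forall>l\<in>LS. set (F l) \<subseteq> V \<times> V \<and> teq2 sc (map snd (filter (\<lambda>e. fst e = l) L)) (F l)"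
    by (rule bchoice[THEN exE]) blast
  define zs where "zs = concat (map F (remdups (map fst fL)))"
  have "set zs \<subseteq> V \<times> V" using F by (auto simp: zs_def LS_def)
  moreover have "teq2 sc (map snd fL) zs"
  proof (rule teq2I)
    fix B assume B: "bilinear_form sc B"
    have "ev2 B (map snd fL) = (\<Sum>l\<in>LS. ev2 B (map snd (filter (\<lambda>e. fst e = l) fL)))"
      unfolding LS_def by (rule ev2_group)
    also have "\<dots> = (\<Sum>l\<in>LS. ev2 B (F l))"
    proof (rule sum.cong)
      fix l assume l: "l \<in> LS"
      then have Pl: "fst l \<in> GS \<and> snd l \<in> GS" by (auto simp: LS_def fL_def)
      have "filter (\<lambda>e. fst e = l) fL = filter (\<lambda>e. fst e = l) L"
        unfolding fL_def using Pl by (induct L) auto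
      moreover have "ev2 B (map snd (filter (\<lambda>e. fst e = l) L)) = ev2 B (F l)"
        using teq2_D[OF conjunct2[OF F[rule_format, OF l]] B] .
      ultimately show "ev2 B (map snd (filter (\<lambda>e. fst e = l) fL)) = ev2 B (F l)" by simp
    qed simp
    also have "\<dots> = sum_list (map (\<lambda>l. ev2 B (F l)) (remdups (map fst fL)))"
      by (simp add: sum_list_distinct_conv_sum_set LS_def)
    also have "\<dots> = ev2 B zs" by (simp add: zs_def ev2_concat)
    finally show "ev2 B (map snd fL) = ev2 B zs" .
  qed
  ultimately show ?thesis using teq2_trans[OF t0] by blast
qed

lemma alin_sc: "alin sc (\<lambda>x. sc c x)"
  by (simp add: alin_def vs.scale_right_distrib vs.scale_left_commute)

lemma teq2_append: "teq2 sc a a' \<Longrightarrow> teq2 sc b b' \<Longrightarrow> teq2 sc (a @ b) (a' @ b')"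
  by (simp add: teq2_ev)

lemma Dm_V: assumes "a \<in> V" shows "\<exists>zs. set zs \<subseteq> V \<times> V \<and> teq2 sc (Dm a) zs"
proof -
  have "a \<in> vs.span SSet" using assms by (simp add: A_ss_def)
  then show ?thesis
proof (induct rule: vs.span_induct_alt)
  case base
  have "set [] \<subseteq> V \<times> V \<and> teq2 sc (Dm 0) []" using Dm_zero by simp
  then show ?case by blast
next
  case (step c s y)
  have "semistable sc \<Gamma> Agr \<Delta> \<mu> s" using step(1) by simp
  from deep[OF this] obtain zs1 where z1: "set zs1 \<subseteq> V \<times> V" "teq2 sc (Dm s) zs1" by blast
  from step(2) obtain zs2 where z2: "set zs2 \<subseteq> V \<times> V" "teq2 sc (Dm y) zs2" by blast
  define zs where "zs = map (\<lambda>(u, v). (sc c u, v)) zs1 @ zs2"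
  have "set zs \<subseteq> V \<times> V" using z1(1) z2(1) V_sc by (auto simp: zs_def)
  moreover have "teq2 sc (Dm (sc c s + y)) zs"
  proof -
    have e1: "teq2 sc (Dm (sc c s + y)) (Dm (sc c s) @ Dm y)" by (rule Dm_add)
    have e2: "teq2 sc (Dm (sc c s)) (map (\<lambda>(u, v). (sc c u, v)) zs1)"
      by (rule teq2_trans[OF Dm_sc teq2_map[OF alin_sc alin_id z1(2)]])
    show ?thesis unfolding zs_def by (rule teq2_trans[OF e1 teq2_append[OF e2 z2(2)]])
  qed
  ultimately show ?case by blast
qed
qed

lemma pr_one: "pr 1 = 1"
  using pr_hom[OF one_Agr0] GS_zero by simp

lemma Dm_one: "teq2 sc (Dm 1) [(1, 1)]"
proof -
  have "teq2 sc (map (\<lambda>(x, y). (pr x, pr y)) (\<Delta> 1)) (map (\<lambda>(x, y). (pr x, pr y)) [(1, 1)])"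
    by (rule teq2_map[OF alin_pr alin_pr D_one])
  then show ?thesis by (simp add: Delta_slope_def pr_one)
qed

end

theorem proposition2p2:
  fixes sc :: "'k::field \<Rightarrow> 'a::ring_1 \<Rightarrow> 'a"
    and \<Gamma> :: "(real \<times> real) set"
    and Agr :: "real \<times> real \<Rightarrow> 'a set"
    and \<Delta> :: "'a \<Rightarrow> ('a \<times> 'a) list"
    and \<epsilon> :: "'a \<Rightarrow> 'k"
    and \<mu> :: ereal
  assumes "connected_graded_bialgebra sc \<Gamma> Agr \<Delta> \<epsilon>"
    and "\<mu> \<noteq> -\<infinity>"
  shows "A_ss sc \<Gamma> Agr \<Delta> \<mu> \<subseteq> A_slope sc \<Gamma> Agr \<mu>
    \<and> module.subspace sc (A_ss sc \<Gamma> Agr \<Delta> \<mu>)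
    \<and> 1 \<in> A_ss sc \<Gamma> Agr \<Delta> \<mu>
    \<and> (\<forall>x\<in>A_ss sc \<Gamma> Agr \<Delta> \<mu>. \<forall>y\<in>A_ss sc \<Gamma> Agr \<Delta> \<mu>. x * y \<in> A_ss sc \<Gamma> Agr \<Delta> \<mu>)
    \<and> (\<forall>a\<in>A_ss sc \<Gamma> Agr \<Delta> \<mu>. \<exists>zs. set zs \<subseteq> A_ss sc \<Gamma> Agr \<Delta> \<mu> \<times> A_ss sc \<Gamma> Agr \<Delta> \<mu>
          \<and> teq2 sc (Delta_slope \<Gamma> Agr \<Delta> \<mu> a) zs)
    \<and> bialgebra_on sc (A_ss sc \<Gamma> Agr \<Delta> \<mu>) (Delta_slope \<Gamma> Agr \<Delta> \<mu>) \<epsilon>"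
proof -
  interpret C: cgb sc \<Gamma> Agr \<Delta> \<epsilon> \<mu> by (rule cgb.intro) (fact assms)+
  have f1: "module.subspace sc (A_ss sc \<Gamma> Agr \<Delta> \<mu>)" by (rule C.V_sub)
  have f2: "1 \<in> A_ss sc \<Gamma> Agr \<Delta> \<mu>" by (rule C.V_one)
  have f3: "\<forall>x\<in>A_ss sc \<Gamma> Agr \<Delta> \<mu>. \<forall>y\<in>A_ss sc \<Gamma> Agr \<Delta> \<mu>. x * y \<in> A_ss sc \<Gamma> Agr \<Delta> \<mu>"
    by (intro ballI) (rule C.V_mult)
  have f4: "\<forall>a\<in>A_ss sc \<Gamma> Agr \<Delta> \<mu>. \<exists>zs. set zs \<subseteq> A_ss sc \<Gamma> Agr \<Delta> \<mu> \<times> A_ss sc \<Gamma> Agr \<Delta> \<mu> \<and> teq2 sc (Delta_slope \<Gamma> Agr \<Delta> \<mu> a) zs"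
    by (intro ballI) (rule C.Dm_V)
  have f5: "\<forall>x\<in>A_ss sc \<Gamma> Agr \<Delta> \<mu>. \<forall>y\<in>A_ss sc \<Gamma> Agr \<Delta> \<mu>. teq2 sc (Delta_slope \<Gamma> Agr \<Delta> \<mu> (x + y)) (Delta_slope \<Gamma> Agr \<Delta> \<mu> x @ Delta_slope \<Gamma> Agr \<Delta> \<mu> y)"
    by (intro ballI) (rule C.Dm_add)
  have f6: "\<forall>s. \<forall>x\<in>A_ss sc \<Gamma> Agr \<Delta> \<mu>. teq2 sc (Delta_slope \<Gamma> Agr \<Delta> \<mu> (sc s x)) (map (\<lambda>(u, v). (sc s u, v)) (Delta_slope \<Gamma> Agr \<Delta> \<mu> x))"
    by (intro ballI allI) (rule C.Dm_sc)
  have f7: "\<forall>x\<in>A_ss sc \<Gamma> Agr \<Delta> \<mu>. \<forall>y\<in>A_ss sc \<Gamma> Agr \<Delta> \<mu>. \<epsilon> (x + y) = \<epsilon> x + \<epsilon> y"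
    by (intro ballI) (rule C.eps_add)
  have f8: "\<forall>s. \<forall>x\<in>A_ss sc \<Gamma> Agr \<Delta> \<mu>. \<epsilon> (sc s x) = s * \<epsilon> x"
    by (intro ballI allI) (rule C.eps_sc)
  have f9: "\<forall>a\<in>A_ss sc \<Gamma> Agr \<Delta> \<mu>. teq3 sc (cop_left (Delta_slope \<Gamma> Agr \<Delta> \<mu>) (Delta_slope \<Gamma> Agr \<Delta> \<mu> a)) (cop_right (Delta_slope \<Gamma> Agr \<Delta> \<mu>) (Delta_slope \<Gamma> Agr \<Delta> \<mu> a))"
    by (intro ballI) (rule C.coassoc_m)
  have f10: "\<forall>a\<in>A_ss sc \<Gamma> Agr \<Delta> \<mu>. sum_list (map (\<lambda>(x, y). sc (\<epsilon> x) y) (Delta_slope \<Gamma> Agr \<Delta> \<mu> a)) = a"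
  proof
    fix a assume "a \<in> A_ss sc \<Gamma> Agr \<Delta> \<mu>"
    then have "a \<in> A_slope sc \<Gamma> Agr \<mu>" using C.V_slope by blast
    then show "sum_list (map (\<lambda>(x, y). sc (\<epsilon> x) y) (Delta_slope \<Gamma> Agr \<Delta> \<mu> a)) = a" by (rule C.counit_m(1))
  qed
  have f11: "\<forall>a\<in>A_ss sc \<Gamma> Agr \<Delta> \<mu>. sum_list (map (\<lambda>(x, y). sc (\<epsilon> y) x) (Delta_slope \<Gamma> Agr \<Delta> \<mu> a)) = a"
  proof
    fix a assume "a \<in> A_ss sc \<Gamma> Agr \<Delta> \<mu>"
    then have "a \<in> A_slope sc \<Gamma> Agr \<mu>" using C.V_slope by blast
    then show "sum_list (map (\<lambda>(x, y). sc (\<epsilon> y) x) (Delta_slope \<Gamma> Agr \<Delta> \<mu> a)) = a" by (rule C.counit_m(2))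
  qed
  have f12: "\<forall>x\<in>A_ss sc \<Gamma> Agr \<Delta> \<mu>. \<forall>y\<in>A_ss sc \<Gamma> Agr \<Delta> \<mu>. teq2 sc (Delta_slope \<Gamma> Agr \<Delta> \<mu> (x * y)) (tmult (Delta_slope \<Gamma> Agr \<Delta> \<mu> x) (Delta_slope \<Gamma> Agr \<Delta> \<mu> y))"
    by (intro ballI) (rule C.Dm_mult)
  have f13: "teq2 sc (Delta_slope \<Gamma> Agr \<Delta> \<mu> 1) [(1, 1)]" by (rule C.Dm_one)
  have f14: "\<forall>x\<in>A_ss sc \<Gamma> Agr \<Delta> \<mu>. \<forall>y\<in>A_ss sc \<Gamma> Agr \<Delta> \<mu>. \<epsilon> (x * y) = \<epsilon> x * \<epsilon> y"
    by (intro ballI) (rule C.eps_mult)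
  have f15: "\<epsilon> 1 = 1" by (rule C.eps_one)
  have bia: "bialgebra_on sc (A_ss sc \<Gamma> Agr \<Delta> \<mu>) (Delta_slope \<Gamma> Agr \<Delta> \<mu>) \<epsilon>"
    unfolding bialgebra_on_def
    by (intro conjI f1 f2 f3 f4 f5 f6 f7 f8 f9 f10 f11 f12 f13 f14 f15)
  have f0: "A_ss sc \<Gamma> Agr \<Delta> \<mu> \<subseteq> A_slope sc \<Gamma> Agr \<mu>" by (rule C.V_slope)
  show ?thesis by (intro conjI f0 f1 f2 f3 f4 bia)
qed

end
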